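(* Consider the $k$-component Gaussian mixture data model and the empirical test risk described in the context, with $\widetilde M=\alpha d$. There are constants $c=c(k)>0$ and $C=C(k)$, independent of $\lambda$, such that for all $t>0$, $$\sup_{\mathbf x\in\mathbb R^{kd}}\mathbb P\big(\|\nabla^2\widehat R(\mathbf x)-\mathbb E[\nabla^2\widehat R(\mathbf x)]\|_{op}>t\big)\le\exp\big(-[c\alpha(t\wedge t^2)-C]d\big),$$ and $$\sup_{\mathbf x\in\mathbb R^{kd}}\mathbb P\big(\|\widehat G(\mathbf x)-\mathbb E[\widehat G(\mathbf x)]\|_{op}>t\big)\le\exp\big(-[c\alpha(t\wedge t^2)-C]d\big).$$
   Context: Let $k\ge2$ and $p_1,\dots,p_k\in(0,1)$ with $\sum_ap_a=1$. Let $\mu_1,\dots,\mu_k\in\mathbb R^d$ be unit vectors and $\lambda\ge1$. A data point is $\mathbf Y=(y,Y)$, $y$ one-hot in $\mathbb R^k$ with $\mathbb P(y=e_a)=p_a$, and given $y=e_a$, $Y=\mu_a+Z$, $Z\sim\mathcal N(0,I_d/\lambda)$. For $\mathbf x=(x^1,\dots,x^k)\in(\mathbb R^d)^k$, the loss is $L(\mathbf x,\mathbf Y)=-\sum_cy_cx^c\cdot Y+\log\sum_c\exp(x^c\cdot Y)$. Given i.i.d. samples $\widetilde{\mathbf Y}^1,\dots,\widetilde{\mathbf Y}^{\widetilde M}$, $\widehat R(\mathbf x)=\frac1{\widetilde M}\sum_\ell L(\mathbf x,\widetilde{\mathbf Y}^\ell)$ and $\widehat G(\mathbf x)=\frac1{\widetilde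 M}\sum_\ell\nabla L(\mathbf x,\widetilde{\mathbf Y}^\ell)^{\otimes2}$. *)

theory Defs
  imports "HOL-Probability.Probability"
begin

text \<open>Parameters x = (x^1,...,x^k) in (R^d)^k are represented as functions
  x :: nat => nat => real, x c i being coordinate i of x^c (c < k, i < d).
  A data point is a pair (a, Y) with label a < k (y = e_a) and Y :: nat => real.\<close>

definition dotp :: "nat \<Rightarrow> (nat \<Rightarrow> real) \<Rightarrow> (nat \<Rightarrow> real) \<Rightarrow> real" where
  "dotp d u v = (\<Sum>i<d. u i * v i)"

definition loss :: "nat \<Rightarrow> nat \<Rightarrow> (nat \<Rightarrow> nat \<Rightarrow> real) \<Rightarrow> nat \<times> (nat \<Rightarrow> real) \<Rightarrow> real" where
  "loss k d x z = - dotp d (x (fst z)) (snd z) + ln (\<Sum>c<k. exp (dotp d (x c) (snd z)))"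

definition pderiv :: "((nat \<Rightarrow> nat \<Rightarrow> real) \<Rightarrow> real) \<Rightarrow> (nat \<Rightarrow> nat \<Rightarrow> real) \<Rightarrow> nat \<times> nat \<Rightarrow> real" where
  "pderiv f x ci = deriv (\<lambda>s. f (x(fst ci := (x (fst ci))(snd ci := s)))) (x (fst ci) (snd ci))"

definition grad :: "((nat \<Rightarrow> nat \<Rightarrow> real) \<Rightarrow> real) \<Rightarrow> (nat \<Rightarrow> nat \<Rightarrow> real) \<Rightarrow> nat \<times> nat \<Rightarrow> real" where
  "grad f x = pderiv f x"

definition hess :: "((nat \<Rightarrow> nat \<Rightarrow> real) \<Rightarrow> real) \<Rightarrow> (nat \<Rightarrow> nat \<Rightarrow> real)
    \<Rightarrow> nat \<times> nat \<Rightarrow> nat \<times> nat \<Rightarrow> real" where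
  "hess f x r s = pderiv (\<lambda>x'. pderiv f x' s) x r"

definition idx :: "nat \<Rightarrow> nat \<Rightarrow> (nat \<times> nat) set" where
  "idx k d = {..<k} \<times> {..<d}"

definition opnorm :: "('i set) \<Rightarrow> ('i \<Rightarrow> 'i \<Rightarrow> real) \<Rightarrow> real" where
  "opnorm I A = Sup {sqrt (\<Sum>r\<in>I. (\<Sum>s\<in>I. A r s * v s)\<^sup>2) | v. (\<Sum>s\<in>I. (v s)\<^sup>2) = 1}"

definition data_dist :: "nat \<Rightarrow> nat \<Rightarrow> (nat \<Rightarrow> real) \<Rightarrow> (nat \<Rightarrow> nat \<Rightarrow> real) \<Rightarrow> real
    \<Rightarrow> (nat \<times> (nat \<Rightarrow> real)) measure" where
  "data_dist k d p mu lam =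
     density (count_space UNIV \<Otimes>\<^sub>M (\<Pi>\<^sub>M i\<in>{..<d}. lborel))
       (\<lambda>z. ennreal (if fst z < k then
                        p (fst z) * (\<Prod>i<d. normal_density (mu (fst z) i) (1 / sqrt lam) (snd z i))
                      else 0))"

definition sample_space :: "nat \<Rightarrow> nat \<Rightarrow> nat \<Rightarrow> (nat \<Rightarrow> real) \<Rightarrow> (nat \<Rightarrow> nat \<Rightarrow> real) \<Rightarrow> real
    \<Rightarrow> (nat \<Rightarrow> nat \<times> (nat \<Rightarrow> real)) measure" where
  "sample_space M k d p mu lam = (\<Pi>\<^sub>M l\<in>{..<M}. data_dist k d p mu lam)"

definition emp_risk :: "nat \<Rightarrow> nat \<Rightarrow> nat \<Rightarrow> (nat \<Rightarrow> nat \<times> (nat \<Rightarrow> real)) \<Rightarrow> (nat \<Rightarrow> nat \<Rightarrow> real) \<Rightarrow> real" where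
  "emp_risk M k d w x = (1 / real M) * (\<Sum>l<M. loss k d x (w l))"

definition emp_G :: "nat \<Rightarrow> nat \<Rightarrow> nat \<Rightarrow> (nat \<Rightarrow> nat \<times> (nat \<Rightarrow> real)) \<Rightarrow> (nat \<Rightarrow> nat \<Rightarrow> real)
    \<Rightarrow> nat \<times> nat \<Rightarrow> nat \<times> nat \<Rightarrow> real" where
  "emp_G M k d w x r s = (1 / real M) *
     (\<Sum>l<M. grad (\<lambda>x'. loss k d x' (w l)) x r * grad (\<lambda>x'. loss k d x' (w l)) x s)"

end

theory Submission
  imports Defs
begin

lemma normal_exp_shift:
  assumes "\<sigma> > 0"
  shows "normal_density \<mu> \<sigma> y * exp (t * y) =
         exp (t * \<mu> + t\<^sup>2 * \<sigma>\<^sup>2 / 2) * normal_density (\<mu> + t * \<sigma>\<^sup>2) \<sigma> y"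
proof -
  have "-(y - \<mu>)\<^sup>2 / (2 * \<sigma>\<^sup>2) + t * y = (t * \<mu> + t\<^sup>2 * \<sigma>\<^sup>2 / 2) + (-(y - (\<mu> + t * \<sigma>\<^sup>2))\<^sup>2 / (2 * \<sigma>\<^sup>2))"
    using assms by (simp add: field_simps power2_eq_square)
  then show ?thesis unfolding normal_density_def
    by (simp add: exp_add[symmetric] mult.assoc mult.left_commute)
qed

lemma nn_integral_normal_density: "\<sigma> > 0 \<Longrightarrow> (\<integral>\<^sup>+ x. normal_density \<mu> \<sigma> x \<partial>lborel) = 1"
  by (subst nn_integral_eq_integral) (auto simp: normal_density_nonneg)

lemma normal_mgf:
  assumes "\<sigma> > 0"
  shows "(\<integral>\<^sup>+ y. ennreal (normal_density \<mu> \<sigma> y * exp (t * y)) \<partial>lborel) =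
         ennreal (exp (t * \<mu> + t\<^sup>2 * \<sigma>\<^sup>2 / 2))"
proof -
  have "(\<integral>\<^sup>+ y. ennreal (normal_density \<mu> \<sigma> y * exp (t * y)) \<partial>lborel) =
        (\<integral>\<^sup>+ y. ennreal (exp (t * \<mu> + t\<^sup>2 * \<sigma>\<^sup>2 / 2)) * ennreal (normal_density (\<mu> + t * \<sigma>\<^sup>2) \<sigma> y) \<partial>lborel)"
    using assms by (intro nn_integral_cong) (simp add: normal_exp_shift ennreal_mult normal_density_nonneg)
  also have "\<dots> = ennreal (exp (t * \<mu> + t\<^sup>2 * \<sigma>\<^sup>2 / 2))"
    using assms by (subst nn_integral_cmult) (auto simp: nn_integral_normal_density)
  finally show ?thesis .
qed

lemma std_normal_exp_quarter:
  "(\<integral>\<^sup>+ x. ennreal (std_normal_density x * exp (x\<^sup>2 / 4)) \<partial>lborel) = ennreal (sqrt 2)"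
proof -
  have eq: "std_normal_density x * exp (x\<^sup>2 / 4) = sqrt 2 * normal_density 0 (sqrt 2) x" for x
  proof -
    have "exp (- x\<^sup>2 / 2) * exp (x\<^sup>2 / 4) = exp (- x\<^sup>2 / 4)"
      by (simp add: exp_add[symmetric])
    then show ?thesis unfolding normal_density_def
      by (simp add: real_sqrt_mult field_simps)
  qed
  show ?thesis
    by (simp add: eq ennreal_mult normal_density_nonneg nn_integral_cmult nn_integral_normal_density)
qed

definition PY :: "nat \<Rightarrow> (nat \<Rightarrow> real) measure" where
  "PY d = (\<Pi>\<^sub>M i\<in>{..<d}. lborel)"

definition gd :: "nat \<Rightarrow> (nat \<Rightarrow> real) \<Rightarrow> real \<Rightarrow> (nat \<Rightarrow> real) \<Rightarrow> real" where
  "gd d m s Y = (\<Prod>i<d. normal_density (m i) s (Y i))"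

interpretation lb: product_sigma_finite "\<lambda>_::nat. lborel :: real measure"
  by standard

lemma sf_PY: "sigma_finite_measure (PY d)"
  unfolding PY_def by (rule lb.sigma_finite) simp

lemma meas_pair_count:
  assumes "\<And>a. (\<lambda>Y. f (a, Y)) \<in> borel_measurable N"
  shows "f \<in> borel_measurable (count_space (UNIV::nat set) \<Otimes>\<^sub>M N)"
  by (rule measurable_pair_measure_countable1) (auto intro: assms)

lemma gd_meas[measurable]: "gd d m s \<in> borel_measurable (PY d)"
  unfolding gd_def PY_def by measurable

lemma gd_nonneg: "0 \<le> gd d m s Y"
  unfolding gd_def by (auto intro!: prod_nonneg normal_density_nonneg)

lemma data_dist_alt:
  "data_dist k d p mu lam = density (count_space UNIV \<Otimes>\<^sub>M PY d)
      (\<lambda>z. ennreal (if fst z < k then p (fst z) * gd d (mu (fst z)) (1 / sqrt lam) (snd z) else 0))"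
  unfolding data_dist_def PY_def gd_def ..

lemma D_nn_integral:
  assumes g: "g \<in> borel_measurable (count_space UNIV \<Otimes>\<^sub>M PY d)"
  shows "(\<integral>\<^sup>+ z. g z \<partial>data_dist k d p mu lam) =
     (\<Sum>a<k. \<integral>\<^sup>+ Y. ennreal (p a * gd d (mu a) (1 / sqrt lam) Y) * g (a, Y) \<partial>PY d)"
proof -
  interpret PYs: sigma_finite_measure "PY d" by (rule sf_PY)
  let ?rho = "\<lambda>z. ennreal (if fst z < k then p (fst z) * gd d (mu (fst z)) (1 / sqrt lam) (snd z) else 0)"
  have rm: "?rho \<in> borel_measurable (count_space UNIV \<Otimes>\<^sub>M PY d)"
    by (rule meas_pair_count) (unfold fst_conv snd_conv, measurable)
  have "(\<integral>\<^sup>+ z. g z \<partial>data_dist k d p mu lam) = (\<integral>\<^sup>+ z. ?rho z * g z \<partial>(count_space UNIV \<Otimes>\<^sub>M PY d))"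
    unfolding data_dist_alt by (rule nn_integral_density[OF rm g])
  also have "\<dots> = (\<integral>\<^sup>+ a. \<integral>\<^sup>+ Y. ?rho (a, Y) * g (a, Y) \<partial>PY d \<partial>count_space UNIV)"
    by (rule PYs.nn_integral_fst[symmetric]) (use rm g in measurable)
  also have "\<dots> = (\<Sum>a. \<integral>\<^sup>+ Y. ?rho (a, Y) * g (a, Y) \<partial>PY d)"
    by (rule nn_integral_count_space_nat)
  also have "\<dots> = (\<Sum>a<k. \<integral>\<^sup>+ Y. ?rho (a, Y) * g (a, Y) \<partial>PY d)"
    by (rule suminf_finite) auto
  also have "\<dots> = (\<Sum>a<k. \<integral>\<^sup>+ Y. ennreal (p a * gd d (mu a) (1 / sqrt lam) Y) * g (a, Y) \<partial>PY d)"
    by (rule sum.cong) auto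
  finally show ?thesis .
qed

lemma gd_nn_integral:
  assumes "s > 0"
  shows "(\<integral>\<^sup>+ Y. ennreal (gd d m s Y) \<partial>PY d) = 1"
proof -
  have "(\<integral>\<^sup>+ Y. ennreal (gd d m s Y) \<partial>PY d) = (\<integral>\<^sup>+ Y. (\<Prod>i\<in>{..<d}. ennreal (normal_density (m i) s (Y i))) \<partial>PY d)"
    unfolding gd_def by (intro nn_integral_cong) (simp add: prod_ennreal normal_density_nonneg)
  also have "\<dots> = (\<Prod>i\<in>{..<d}. \<integral>\<^sup>+ y. ennreal (normal_density (m i) s y) \<partial>lborel)"
    unfolding PY_def by (rule lb.product_nn_integral_prod) auto
  also have "\<dots> = 1" using assms by (simp add: nn_integral_normal_density)
  finally show ?thesis .
qed

lemma gd_mgf: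
  assumes "s > 0"
  shows "(\<integral>\<^sup>+ Y. ennreal (gd d m s Y * exp (t * (\<Sum>i<d. w i * Y i))) \<partial>PY d) =
     ennreal (exp (t * (\<Sum>i<d. w i * m i) + t\<^sup>2 * s\<^sup>2 * (\<Sum>i<d. (w i)\<^sup>2) / 2))"
proof -
  have "(\<integral>\<^sup>+ Y. ennreal (gd d m s Y * exp (t * (\<Sum>i<d. w i * Y i))) \<partial>PY d) =
     (\<integral>\<^sup>+ Y. (\<Prod>i\<in>{..<d}. ennreal (normal_density (m i) s (Y i) * exp ((t * w i) * Y i))) \<partial>PY d)"
    unfolding gd_def
    by (intro nn_integral_cong)
       (simp add: prod_ennreal normal_density_nonneg sum_distrib_left exp_sum prod.distrib mult.assoc)
  also have "\<dots> = (\<Prod>i\<in>{..<d}. \<integral>\<^sup>+ y. ennreal (normal_density (m i) s y * exp ((t * w i) * y)) \<partial>lborel)"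
    unfolding PY_def by (rule lb.product_nn_integral_prod) auto
  also have "\<dots> = (\<Prod>i\<in>{..<d}. ennreal (exp ((t * w i) * m i + (t * w i)\<^sup>2 * s\<^sup>2 / 2)))"
    using assms by (simp add: normal_mgf)
  also have "\<dots> = ennreal (\<Prod>i\<in>{..<d}. exp ((t * w i) * m i + (t * w i)\<^sup>2 * s\<^sup>2 / 2))"
    by (simp add: prod_ennreal)
  also have "(\<Prod>i\<in>{..<d}. exp ((t * w i) * m i + (t * w i)\<^sup>2 * s\<^sup>2 / 2)) =
      exp (t * (\<Sum>i<d. w i * m i) + t\<^sup>2 * s\<^sup>2 * (\<Sum>i<d. (w i)\<^sup>2) / 2)"
    by (simp add: exp_sum[symmetric] sum.distrib sum_distrib_left sum_divide_distrib power_mult_distrib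
         algebra_simps)
  finally show ?thesis .
qed

lemma sets_D: "sets (data_dist k d p mu lam) = sets (count_space UNIV \<Otimes>\<^sub>M PY d)"
  unfolding data_dist_alt by simp

lemma space_D: "space (data_dist k d p mu lam) = space (count_space UNIV \<Otimes>\<^sub>M PY d)"
  unfolding data_dist_alt by simp

lemma meas_D: "f \<in> borel_measurable (count_space UNIV \<Otimes>\<^sub>M PY d) \<Longrightarrow>
   f \<in> borel_measurable (data_dist k d p mu lam)"
  using measurable_cong_sets[OF sets_D refl] by blast

lemma prob_D:
  assumes "\<forall>a<k. 0 \<le> p a" "(\<Sum>a<k. p a) = 1" "lam > 0"
  shows "prob_space (data_dist k d p mu lam)"
proof (rule prob_spaceI)
  have "emeasure (data_dist k d p mu lam) (space (data_dist k d p mu lam)) =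
      (\<integral>\<^sup>+ z. 1 \<partial>data_dist k d p mu lam)" by simp
  also have "\<dots> = (\<Sum>a<k. \<integral>\<^sup>+ Y. ennreal (p a * gd d (mu a) (1 / sqrt lam) Y) * 1 \<partial>PY d)"
    by (rule D_nn_integral) simp
  also have "\<dots> = (\<Sum>a<k. ennreal (p a))"
  proof (rule sum.cong)
    fix a assume "a \<in> {..<k}"
    then have pa: "0 \<le> p a" using assms by auto
    have "(\<integral>\<^sup>+ Y. ennreal (p a * gd d (mu a) (1 / sqrt lam) Y) * 1 \<partial>PY d) =
        (\<integral>\<^sup>+ Y. ennreal (p a) * ennreal (gd d (mu a) (1 / sqrt lam) Y) \<partial>PY d)"
      using pa by (simp add: ennreal_mult gd_nonneg)
    also have "\<dots> = ennreal (p a) * (\<integral>\<^sup>+ Y. ennreal (gd d (mu a) (1 / sqrt lam) Y) \<partial>PY d)"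
      by (rule nn_integral_cmult) simp
    also have "\<dots> = ennreal (p a)" using assms by (simp add: gd_nn_integral)
    finally show "(\<integral>\<^sup>+ Y. ennreal (p a * gd d (mu a) (1 / sqrt lam) Y) * 1 \<partial>PY d) = ennreal (p a)" .
  qed simp
  also have "\<dots> = ennreal (\<Sum>a<k. p a)" by (rule sum_ennreal) (use assms in auto)
  finally show "emeasure (data_dist k d p mu lam) (space (data_dist k d p mu lam)) = 1"
    using assms by simp
qed

lemma D_mgf:
  assumes "\<forall>a<k. 0 \<le> p a" "lam > 0"
  shows "(\<integral>\<^sup>+ z. ennreal (exp (t * (\<Sum>i<d. w i * snd z i))) \<partial>data_dist k d p mu lam) =
     ennreal (\<Sum>a<k. p a * exp (t * (\<Sum>i<d. w i * mu a i) + t\<^sup>2 * (1 / sqrt lam)\<^sup>2 * (\<Sum>i<d. (w i)\<^sup>2) / 2))"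
proof -
  have "(\<integral>\<^sup>+ z. ennreal (exp (t * (\<Sum>i<d. w i * snd z i))) \<partial>data_dist k d p mu lam) =
     (\<Sum>a<k. \<integral>\<^sup>+ Y. ennreal (p a * gd d (mu a) (1 / sqrt lam) Y) * ennreal (exp (t * (\<Sum>i<d. w i * snd (a, Y) i))) \<partial>PY d)"
    by (rule D_nn_integral) (rule meas_pair_count, unfold snd_conv PY_def, measurable)
  also have "\<dots> = (\<Sum>a<k. ennreal (p a * exp (t * (\<Sum>i<d. w i * mu a i) + t\<^sup>2 * (1 / sqrt lam)\<^sup>2 * (\<Sum>i<d. (w i)\<^sup>2) / 2)))"
  proof (rule sum.cong)
    fix a assume "a \<in> {..<k}"
    then have pa: "0 \<le> p a" using assms by auto
    have "(\<integral>\<^sup>+ Y. ennreal (p a * gd d (mu a) (1 / sqrt lam) Y) * ennreal (exp (t * (\<Sum>i<d. w i * snd (a, Y) i))) \<partial>PY d)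
       = (\<integral>\<^sup>+ Y. ennreal (p a) * ennreal (gd d (mu a) (1 / sqrt lam) Y * exp (t * (\<Sum>i<d. w i * Y i))) \<partial>PY d)"
      using pa by (intro nn_integral_cong) (simp add: ennreal_mult[symmetric] gd_nonneg mult.assoc)
    also have "\<dots> = ennreal (p a) * (\<integral>\<^sup>+ Y. ennreal (gd d (mu a) (1 / sqrt lam) Y * exp (t * (\<Sum>i<d. w i * Y i))) \<partial>PY d)"
      by (rule nn_integral_cmult) (unfold gd_def PY_def, measurable)
    also have "\<dots> = ennreal (p a * exp (t * (\<Sum>i<d. w i * mu a i) + t\<^sup>2 * (1 / sqrt lam)\<^sup>2 * (\<Sum>i<d. (w i)\<^sup>2) / 2))"
      using assms pa by (simp add: gd_mgf ennreal_mult)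
    finally show "(\<integral>\<^sup>+ Y. ennreal (p a * gd d (mu a) (1 / sqrt lam) Y) * ennreal (exp (t * (\<Sum>i<d. w i * snd (a, Y) i))) \<partial>PY d) =
        ennreal (p a * exp (t * (\<Sum>i<d. w i * mu a i) + t\<^sup>2 * (1 / sqrt lam)\<^sup>2 * (\<Sum>i<d. (w i)\<^sup>2) / 2))" .
  qed simp
  also have "\<dots> = ennreal (\<Sum>a<k. p a * exp (t * (\<Sum>i<d. w i * mu a i) + t\<^sup>2 * (1 / sqrt lam)\<^sup>2 * (\<Sum>i<d. (w i)\<^sup>2) / 2))"
    using assms by (intro sum_ennreal) auto
  finally show ?thesis .
qed

lemma exp_sq_as_integral:
  "ennreal (exp (g\<^sup>2 / 32)) = (\<integral>\<^sup>+ x. ennreal (std_normal_density x * exp ((g / 4) * x)) \<partial>lborel)"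
proof -
  have "(\<integral>\<^sup>+ x. ennreal (std_normal_density x * exp ((g / 4) * x)) \<partial>lborel) =
      ennreal (exp ((g/4) * 0 + (g/4)\<^sup>2 * 1\<^sup>2 / 2))"
    by (rule normal_mgf) simp
  also have "(g/4) * 0 + (g/4)\<^sup>2 * 1\<^sup>2 / 2 = g\<^sup>2 / 32" by (simp add: power2_eq_square)
  finally show ?thesis by simp
qed

lemma D_quad:
  assumes p: "\<forall>a<k. 0 \<le> p a" "(\<Sum>a<k. p a) = 1" and lam: "lam \<ge> 1"
    and w: "(\<Sum>i<d. (w i)\<^sup>2) \<le> 4" and wm: "\<forall>a<k. \<bar>\<Sum>i<d. w i * mu a i\<bar> \<le> 2"
  shows "(\<integral>\<^sup>+ z. ennreal (exp ((\<Sum>i<d. w i * snd z i)\<^sup>2 / 32)) \<partial>data_dist k d p mu lam) \<le> 4"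
proof -
  let ?D = "data_dist k d p mu lam"
  let ?F = "\<lambda>z x. ennreal (std_normal_density x * exp (((\<Sum>i<d. w i * snd z i) / 4) * x))"
  interpret D: prob_space ?D using prob_D[of k p lam] p lam by auto
  interpret P: pair_sigma_finite ?D lborel by unfold_locales
  have Fm: "case_prod ?F \<in> borel_measurable (?D \<Otimes>\<^sub>M lborel)"
  proof -
    have "case_prod ?F \<in> borel_measurable ((count_space UNIV \<Otimes>\<^sub>M PY d) \<Otimes>\<^sub>M lborel)"
      unfolding PY_def by measurable
    then show ?thesis using measurable_cong_sets[OF sets_pair_measure_cong[OF sets_D refl] refl] by blast
  qed
  have "(\<integral>\<^sup>+ z. ennreal (exp ((\<Sum>i<d. w i * snd z i)\<^sup>2 / 32)) \<partial>?D) = (\<integral>\<^sup>+ z. \<integral>\<^sup>+ x. ?F z x \<partial>lborel \<partial>?D)"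
    by (simp add: exp_sq_as_integral)
  also have "\<dots> = (\<integral>\<^sup>+ x. \<integral>\<^sup>+ z. ?F z x \<partial>?D \<partial>lborel)"
    by (rule P.Fubini'[symmetric]) (rule Fm)
  also have "\<dots> \<le> (\<integral>\<^sup>+ x. ennreal (exp (1/2)) * ennreal (std_normal_density x * exp (x\<^sup>2 / 4)) \<partial>lborel)"
  proof (rule nn_integral_mono)
    fix x :: real
    have "(\<integral>\<^sup>+ z. ?F z x \<partial>?D) = (\<integral>\<^sup>+ z. ennreal (std_normal_density x) * ennreal (exp ((x / 4) * (\<Sum>i<d. w i * snd z i))) \<partial>?D)"
      by (intro nn_integral_cong) (simp add: ennreal_mult[symmetric] normal_density_nonneg mult.commute)
    also have "\<dots> = ennreal (std_normal_density x) * (\<integral>\<^sup>+ z. ennreal (exp ((x / 4) * (\<Sum>i<d. w i * snd z i))) \<partial>?D)"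
      by (rule nn_integral_cmult) (rule meas_D, unfold PY_def, measurable)
    also have "\<dots> = ennreal (std_normal_density x) * ennreal (\<Sum>a<k. p a * exp ((x/4) * (\<Sum>i<d. w i * mu a i) + (x/4)\<^sup>2 * (1 / sqrt lam)\<^sup>2 * (\<Sum>i<d. (w i)\<^sup>2) / 2))"
      using p lam by (subst D_mgf) auto
    also have "\<dots> \<le> ennreal (std_normal_density x) * ennreal (\<Sum>a<k. p a * exp (1/2 + x\<^sup>2/4))"
    proof (rule mult_left_mono, rule ennreal_leI, rule sum_mono)
      fix a assume a: "a \<in> {..<k}"
      have s2: "(1 / sqrt lam)\<^sup>2 \<le> 1" using lam by (simp add: power_divide)
      have s2': "(1 / sqrt lam)\<^sup>2 \<ge> 0" by simp
      have m: "\<bar>\<Sum>i<d. w i * mu a i\<bar> \<le> 2" using wm a by auto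
      have e1: "(x/4) * (\<Sum>i<d. w i * mu a i) \<le> 1/2 + x\<^sup>2/8"
      proof -
        have "(x/4) * (\<Sum>i<d. w i * mu a i) \<le> \<bar>x/4\<bar> * \<bar>\<Sum>i<d. w i * mu a i\<bar>"
          by (metis abs_ge_self abs_mult)
        also have "\<dots> \<le> \<bar>x\<bar>/4 * 2" using mult_left_mono[OF m, of "\<bar>x\<bar>/4"] by simp
        also have "\<dots> \<le> 1/2 + x\<^sup>2/8"
        proof -
          have "0 \<le> (\<bar>x\<bar> - 2)\<^sup>2" by simp
          then show ?thesis by (simp add: power2_eq_square algebra_simps)
        qed
        finally show ?thesis .
      qed
      have e2: "(x/4)\<^sup>2 * (1 / sqrt lam)\<^sup>2 * (\<Sum>i<d. (w i)\<^sup>2) / 2 \<le> x\<^sup>2/8"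
      proof -
        have "(x/4)\<^sup>2 * (1 / sqrt lam)\<^sup>2 * (\<Sum>i<d. (w i)\<^sup>2) \<le> (x/4)\<^sup>2 * 1 * 4"
          using s2 s2' w by (intro mult_mono) (auto intro: sum_nonneg)
        then show ?thesis by (simp add: power2_eq_square)
      qed
      have e3: "(x/4) * (\<Sum>i<d. w i * mu a i) + (x/4)\<^sup>2 * (1 / sqrt lam)\<^sup>2 * (\<Sum>i<d. (w i)\<^sup>2) / 2 \<le> 1/2 + x\<^sup>2/4"
        using e1 e2 by linarith
      have "p a * exp ((x/4) * (\<Sum>i<d. w i * mu a i) + (x/4)\<^sup>2 * (1 / sqrt lam)\<^sup>2 * (\<Sum>i<d. (w i)\<^sup>2) / 2)
          \<le> p a * exp (1/2 + x\<^sup>2/4)"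
        using p a e3 by (intro mult_left_mono) auto
      then show "p a * exp ((x/4) * (\<Sum>i<d. w i * mu a i) + (x/4)\<^sup>2 * (1 / sqrt lam)\<^sup>2 * (\<Sum>i<d. (w i)\<^sup>2) / 2)
          \<le> p a * exp (1/2 + x\<^sup>2/4)" .
    qed simp
    also have "\<dots> = ennreal (exp (1/2)) * ennreal (std_normal_density x * exp (x\<^sup>2 / 4))"
      using p by (simp add: sum_distrib_right[symmetric] exp_add ennreal_mult[symmetric] normal_density_nonneg mult_ac)
    finally show "(\<integral>\<^sup>+ z. ?F z x \<partial>?D) \<le> ennreal (exp (1/2)) * ennreal (std_normal_density x * exp (x\<^sup>2 / 4))" .
  qed
  also have "\<dots> = ennreal (exp (1/2)) * ennreal (sqrt 2)"
    by (subst nn_integral_cmult) (auto simp: std_normal_exp_quarter)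
  also have "\<dots> \<le> 4"
  proof -
    have "exp (1/2::real) \<le> 2"
    proof -
      have "exp (1/2::real) \<le> 1 + 2 * (1/2)" by (rule real_exp_bound_lemma) auto
      then show ?thesis by simp
    qed
    moreover have "sqrt (2::real) \<le> 2" by (simp add: real_sqrt_le_iff[of 2 4, simplified] )
    ultimately have "exp (1/2::real) * sqrt 2 \<le> 4"
      by (metis mult_mono exp_ge_zero real_sqrt_ge_zero zero_le_numeral mult_2_right numeral_Bit0 numeral_times_numeral)
    then show ?thesis by (simp add: ennreal_mult[symmetric] ennreal_leI del: ennreal_numeral) (metis ennreal_leI ennreal_numeral)
  qed
  finally show ?thesis .
qed

lemma exp_quad_bound: "exp (u::real) \<le> 1 + u + u\<^sup>2 * exp \<bar>u\<bar>"
proof -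
  obtain t where t: "\<bar>t\<bar> \<le> \<bar>u\<bar>" "exp u = (\<Sum>m<2. (u ^ m) / fact m) + (exp t / fact 2) * u ^ 2"
    using Maclaurin_exp_le[of u 2] by blast
  have "exp t \<le> exp \<bar>u\<bar>" using t(1) by simp
  moreover have "0 < exp t" by simp
  moreover have "exp t / fact 2 = exp t / 2" by (simp add: fact_numeral)
  ultimately have "exp t / fact 2 \<le> exp \<bar>u\<bar>" by linarith
  then have "(exp t / fact 2) * u ^ 2 \<le> exp \<bar>u\<bar> * u\<^sup>2"
    by (rule mult_right_mono) simp
  then have "(exp t / fact 2) * u ^ 2 \<le> u\<^sup>2 * exp \<bar>u\<bar>" by (simp add: mult.commute)
  moreover have "(\<Sum>m<2. (u ^ m) / fact m) = 1 + u" by (simp add: numeral_2_eq_2)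
  ultimately show ?thesis using t(2) by simp
qed

lemma sq_le_exp: "0 \<le> (y::real) \<Longrightarrow> y\<^sup>2 \<le> 2 * exp y"
proof -
  assume y: "0 \<le> y"
  obtain t where t: "\<bar>t\<bar> \<le> \<bar>y\<bar>" "exp y = (\<Sum>m<3. (y ^ m) / fact m) + (exp t / fact 3) * y ^ 3"
    using Maclaurin_exp_le[of y 3] by blast
  have "(\<Sum>m<3. (y ^ m) / fact m) = 1 + y + y\<^sup>2 / 2" by (simp add: numeral_3_eq_3 fact_numeral power2_eq_square)
  moreover have "0 \<le> (exp t / fact 3) * y ^ 3" using y by simp
  ultimately show ?thesis using t(2) y by simp
qed

definition K2c :: "real \<Rightarrow> real \<Rightarrow> real" where "K2c \<eta> K = 32 * exp K * K / \<eta>\<^sup>2"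

lemma mgf_bound:
  fixes D :: "'a measure" and f :: "'a \<Rightarrow> real"
  assumes D: "prob_space D" and fm[measurable]: "f \<in> borel_measurable D" and eta: "\<eta> > 0"
    and K: "(\<integral>\<^sup>+x. ennreal (exp (\<eta> * \<bar>f x\<bar>)) \<partial>D) \<le> ennreal K" "K \<ge> 0"
    and th: "\<bar>\<theta>\<bar> \<le> \<eta> / 4"
  shows "(\<integral>\<^sup>+x. ennreal (exp (\<theta> * (f x - (\<integral>x. f x \<partial>D)))) \<partial>D) \<le> ennreal (exp (\<theta>\<^sup>2 * K2c \<eta> K))"
proof -
  interpret prob_space D by (rule D)
  define E where "E x = exp (\<eta> * \<bar>f x\<bar>)" for x
  have Em[measurable]: "E \<in> borel_measurable D" unfolding E_def by measurable
  have intE: "integrable D E"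
    by (rule integrableI_nonneg) (use le_less_trans[OF K(1) ennreal_less_top] in \<open>auto simp: E_def\<close>)
  have eqE: "ennreal (\<integral>x. E x \<partial>D) = (\<integral>\<^sup>+x. ennreal (E x) \<partial>D)"
    apply (rule nn_integral_eq_integral[symmetric])
     apply (rule intE)
    apply (simp add: E_def)
    done
  have "(\<integral>\<^sup>+x. ennreal (E x) \<partial>D) \<le> ennreal K" using K(1) by (simp add: E_def)
  then have "ennreal (\<integral>x. E x \<partial>D) \<le> ennreal K" using eqE by simp
  then have intE_le: "(\<integral>x. E x \<partial>D) \<le> K" using K(2) by simp
  have E0: "0 \<le> E x" for x unfolding E_def by simp
  have fE: "\<bar>f x\<bar> \<le> E x / \<eta>" for x
  proof -
    have "\<eta> * \<bar>f x\<bar> \<le> E x" unfolding E_def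
      using exp_ge_add_one_self[of "\<eta> * \<bar>f x\<bar>"] by linarith
    then show ?thesis using eta by (simp add: field_simps)
  qed
  have intf: "integrable D f"
    by (rule Bochner_Integration.integrable_bound[of _ "\<lambda>x. E x / \<eta>"]) (use intE fE E0 eta in \<open>auto simp: abs_of_nonneg\<close>)
  define m where "m = (\<integral>x. f x \<partial>D)"
  have "\<bar>m\<bar> \<le> (\<integral>x. \<bar>f x\<bar> \<partial>D)" unfolding m_def by (rule integral_abs_bound[unfolded real_norm_def])
  also have "\<dots> \<le> (\<integral>x. E x / \<eta> \<partial>D)"
    by (rule integral_mono) (use intE intf fE in auto)
  also have "\<dots> = (\<integral>x. E x \<partial>D) / \<eta>" by simp
  also have "\<dots> \<le> K / \<eta>" using intE_le eta by (simp add: divide_right_mono)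
  finally have em: "\<eta> * \<bar>m\<bar> \<le> K" using eta by (simp add: field_simps)
  define h where "h x = (f x - m)\<^sup>2 * exp (\<bar>\<theta>\<bar> * \<bar>f x - m\<bar>)" for x
  have hm[measurable]: "h \<in> borel_measurable D" unfolding h_def by measurable
  have hb: "h x \<le> 32 / \<eta>\<^sup>2 * exp (\<eta> * \<bar>m\<bar>) * E x" for x
  proof -
    let ?a = "\<bar>f x - m\<bar>"
    have "(\<eta> * ?a / 4)\<^sup>2 \<le> 2 * exp (\<eta> * ?a / 4)" using eta by (intro sq_le_exp) auto
    then have a2: "?a\<^sup>2 \<le> 32 / \<eta>\<^sup>2 * exp (\<eta> * ?a / 4)" using eta
      by (simp add: power_mult_distrib field_simps power2_eq_square)
    have e: "exp (\<bar>\<theta>\<bar> * ?a) \<le> exp (\<eta> * ?a / 4)" using mult_right_mono[OF th, of "\<bar>f x - m\<bar>"] by simp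
    have "h x = ?a\<^sup>2 * exp (\<bar>\<theta>\<bar> * ?a)" unfolding h_def by simp
    also have "\<dots> \<le> 32 / \<eta>\<^sup>2 * exp (\<eta> * ?a / 4) * exp (\<eta> * ?a / 4)"
      using a2 e by (intro mult_mono) auto
    also have "\<dots> = 32 / \<eta>\<^sup>2 * exp (\<eta> * ?a / 4 + \<eta> * ?a / 4)" by (simp only: exp_add mult.assoc)
    also have "\<dots> = 32 / \<eta>\<^sup>2 * exp (\<eta> * ?a / 2)" by simp
    also have "\<dots> \<le> 32 / \<eta>\<^sup>2 * exp (\<eta> * \<bar>m\<bar> + \<eta> * \<bar>f x\<bar>)"
    proof -
      have "?a \<le> \<bar>m\<bar> + \<bar>f x\<bar>" by simp
      then have "\<eta> * ?a \<le> \<eta> * (\<bar>m\<bar> + \<bar>f x\<bar>)" using eta by (intro mult_left_mono) auto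
      moreover have "0 \<le> \<eta> * ?a" using eta by simp
      ultimately have "\<eta> * ?a / 2 \<le> \<eta> * \<bar>m\<bar> + \<eta> * \<bar>f x\<bar>" by (simp add: distrib_left)
      then show ?thesis by (intro mult_left_mono) auto
    qed
    also have "\<dots> = 32 / \<eta>\<^sup>2 * exp (\<eta> * \<bar>m\<bar>) * E x" by (simp add: E_def exp_add)
    finally show ?thesis .
  qed
  have h0: "0 \<le> h x" for x unfolding h_def by simp
  have inth: "integrable D h"
    by (rule Bochner_Integration.integrable_bound[of _ "\<lambda>x. 32 / \<eta>\<^sup>2 * exp (\<eta> * \<bar>m\<bar>) * E x"]) (use intE hb h0 E0 eta in \<open>auto simp: abs_of_nonneg\<close>)
  have "(\<integral>x. h x \<partial>D) \<le> (\<integral>x. 32 / \<eta>\<^sup>2 * exp (\<eta> * \<bar>m\<bar>) * E x \<partial>D)"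
    by (rule integral_mono) (use intE inth hb in auto)
  also have "\<dots> = 32 / \<eta>\<^sup>2 * exp (\<eta> * \<bar>m\<bar>) * (\<integral>x. E x \<partial>D)" by simp
  also have "\<dots> \<le> 32 / \<eta>\<^sup>2 * exp K * K"
    using em intE_le eta by (intro mult_mono) (auto intro: integral_nonneg_AE simp: E_def)
  finally have inth_le: "(\<integral>x. h x \<partial>D) \<le> K2c \<eta> K" by (simp add: K2c_def)
  define g where "g x = 1 + \<theta> * (f x - m) + \<theta>\<^sup>2 * h x" for x
  have ge: "exp (\<theta> * (f x - m)) \<le> g x" for x
  proof -
    have "exp (\<theta> * (f x - m)) \<le> 1 + \<theta> * (f x - m) + (\<theta> * (f x - m))\<^sup>2 * exp \<bar>\<theta> * (f x - m)\<bar>"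
      by (rule exp_quad_bound)
    also have "\<dots> = g x" unfolding g_def h_def by (simp add: power_mult_distrib abs_mult)
    finally show ?thesis .
  qed
  have intg: "integrable D g" unfolding g_def using intf inth by auto
  have "(\<integral>\<^sup>+x. ennreal (exp (\<theta> * (f x - m))) \<partial>D) \<le> (\<integral>\<^sup>+x. ennreal (g x) \<partial>D)"
    by (rule nn_integral_mono) (use ge in \<open>auto intro: ennreal_leI\<close>)
  also have "\<dots> = ennreal (\<integral>x. g x \<partial>D)"
    by (rule nn_integral_eq_integral) (use intg ge in \<open>auto intro: order_trans[OF exp_ge_zero]\<close>)
  also have "(\<integral>x. g x \<partial>D) = 1 + \<theta> * ((\<integral>x. f x \<partial>D) - m) + \<theta>\<^sup>2 * (\<integral>x. h x \<partial>D)"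
    unfolding g_def using intf inth by (simp add: prob_space)
  also have "\<dots> = 1 + \<theta>\<^sup>2 * (\<integral>x. h x \<partial>D)" by (simp add: m_def)
  also have "\<dots> \<le> exp (\<theta>\<^sup>2 * K2c \<eta> K)"
  proof -
    have "1 + \<theta>\<^sup>2 * (\<integral>x. h x \<partial>D) \<le> 1 + \<theta>\<^sup>2 * K2c \<eta> K"
      using inth_le by (simp add: mult_left_mono)
    also have "\<dots> \<le> exp (\<theta>\<^sup>2 * K2c \<eta> K)" by (rule exp_ge_add_one_self[unfolded add.commute[of _ 1]])
    finally show ?thesis .
  qed
  finally show ?thesis unfolding m_def by (simp add: ennreal_leI)
qed

definition bcst :: "real \<Rightarrow> real \<Rightarrow> real" where
  "bcst \<eta> K = min (1 / (4 * K2c \<eta> K)) (\<eta> / 8)"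

lemma chernoff_arith:
  fixes K2 \<eta> \<tau> :: real
  assumes "K2 > 0" "\<eta> > 0" "\<tau> > 0" and th: "\<theta> = min (\<eta>/4) (\<tau>/(2*K2))"
  shows "\<theta>\<^sup>2 * K2 - \<theta> * \<tau> \<le> - (min (1/(4*K2)) (\<eta>/8) * min \<tau> (\<tau>\<^sup>2))"
proof (cases "\<tau>/(2*K2) \<le> \<eta>/4")
  case True
  then have t: "\<theta> = \<tau>/(2*K2)" using th by simp
  have "\<theta>\<^sup>2 * K2 - \<theta> * \<tau> = - (\<tau>\<^sup>2 / (4*K2))" unfolding t using assms(1)
    by (simp add: field_simps power2_eq_square)
  moreover have "min (1/(4*K2)) (\<eta>/8) * min \<tau> (\<tau>\<^sup>2) \<le> (1/(4*K2)) * \<tau>\<^sup>2"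
    using assms by (intro mult_mono) auto
  ultimately show ?thesis by simp
next
  case False
  then have t: "\<theta> = \<eta>/4" using th by simp
  have "\<theta> < \<tau>/(2*K2)" using False t by simp
  then have "\<theta> * (2*K2) < \<tau>" using assms(1) by (simp add: less_divide_eq)
  then have "\<theta> * K2 \<le> \<tau> / 2" by (simp add: mult.commute mult.left_commute)
  then have "\<theta> * (\<theta> * K2) \<le> \<theta> * (\<tau> / 2)" by (rule mult_left_mono) (simp add: t assms(2) less_imp_le)
  then have "\<theta>\<^sup>2 * K2 - \<theta> * \<tau> \<le> - (\<eta> / 8 * \<tau>)" unfolding t by (simp add: power2_eq_square algebra_simps)
  moreover have "min (1/(4*K2)) (\<eta>/8) * min \<tau> (\<tau>\<^sup>2) \<le> (\<eta>/8) * \<tau>"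
    using assms by (intro mult_mono) auto
  ultimately show ?thesis by simp
qed

lemma upper_tail:
  fixes D :: "'a measure" and f :: "'a \<Rightarrow> real"
  assumes D: "prob_space D" and fm[measurable]: "f \<in> borel_measurable D" and eta: "\<eta> > 0"
    and K: "(\<integral>\<^sup>+x. ennreal (exp (\<eta> * \<bar>f x\<bar>)) \<partial>D) \<le> ennreal K" "K \<ge> 1"
    and M: "M \<ge> 1" and tau: "\<tau> > 0"
  shows "measure (\<Pi>\<^sub>M l\<in>{..<M}. D) {w \<in> space (\<Pi>\<^sub>M l\<in>{..<M}. D).
            \<tau> < (\<Sum>l<M. f (w l)) / real M - (\<integral>x. f x \<partial>D)}
         \<le> exp (- (real M * bcst \<eta> K * min \<tau> (\<tau>\<^sup>2)))"
proof -
  interpret D: prob_space D by (rule D)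
  interpret P: finite_product_prob_space "\<lambda>_. D" "{..<M}"
    by unfold_locales auto
  let ?O = "\<Pi>\<^sub>M l\<in>{..<M}. D"
  define K2 where "K2 = K2c \<eta> K"
  have K2: "K2 > 0" unfolding K2_def K2c_def using K eta by simp
  define \<theta> where "\<theta> = min (\<eta>/4) (\<tau>/(2*K2))"
  have th0: "\<theta> > 0" unfolding \<theta>_def using K2 eta tau by simp
  have th1: "\<bar>\<theta>\<bar> \<le> \<eta>/4" unfolding \<theta>_def using th0 \<theta>_def by auto
  define m where "m = (\<integral>x. f x \<partial>D)"
  define G where "G w = (\<Prod>l\<in>{..<M}. ennreal (exp (\<theta> * (f (w l) - m))))" for w
  have Gm[measurable]: "G \<in> borel_measurable ?O" unfolding G_def by measurable
  define c where "c = exp (- (\<theta> * real M * \<tau>))"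
  have c0: "c > 0" unfolding c_def by simp
  define A where "A = {w \<in> space ?O. \<tau> < (\<Sum>l<M. f (w l)) / real M - m}"
  have Am: "A \<in> sets ?O" unfolding A_def by measurable
  have AB: "A \<subseteq> {w \<in> space ?O. 1 \<le> ennreal c * G w}"
  proof
    fix w assume w: "w \<in> A"
    then have "real M * \<tau> < (\<Sum>l<M. f (w l)) - real M * m" unfolding A_def using M
      by (simp add: field_simps)
    then have "\<theta> * (real M * \<tau>) < \<theta> * ((\<Sum>l<M. f (w l)) - real M * m)"
      using th0 by simp
    then have "0 < \<theta> * (\<Sum>l<M. (f (w l) - m)) - \<theta> * real M * \<tau>"
      by (simp add: sum_subtractf algebra_simps)
    then have "1 \<le> exp (- (\<theta> * real M * \<tau>) + (\<Sum>l<M. \<theta> * (f (w l) - m)))"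
      by (simp add: sum_distrib_left)
    also have "\<dots> = c * (\<Prod>l\<in>{..<M}. exp (\<theta> * (f (w l) - m)))"
      unfolding c_def by (simp add: exp_add exp_sum exp_minus exp_diff divide_inverse mult.commute)
    finally have "1 \<le> c * (\<Prod>l\<in>{..<M}. exp (\<theta> * (f (w l) - m)))" .
    then have "ennreal 1 \<le> ennreal (c * (\<Prod>l\<in>{..<M}. exp (\<theta> * (f (w l) - m))))"
      by (rule ennreal_leI)
    also have "\<dots> = ennreal c * G w" unfolding G_def using c0
      by (subst ennreal_mult) (auto intro: prod_nonneg simp: prod_ennreal)
    finally show "w \<in> {w \<in> space ?O. 1 \<le> ennreal c * G w}" using w unfolding A_def by simp
  qed
  have "emeasure ?O A \<le> emeasure ?O {w \<in> space ?O. 1 \<le> ennreal c * G w}"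
    by (rule emeasure_mono[OF AB]) measurable
  also have "\<dots> \<le> ennreal c * (\<integral>\<^sup>+ w. G w * indicator (space ?O) w \<partial>?O)"
    by (rule nn_integral_Markov_inequality) auto
  also have "(\<integral>\<^sup>+ w. G w * indicator (space ?O) w \<partial>?O) = (\<integral>\<^sup>+ w. G w \<partial>?O)"
    by (intro nn_integral_cong) auto
  also have "\<dots> = (\<Prod>l\<in>{..<M}. \<integral>\<^sup>+ x. ennreal (exp (\<theta> * (f x - m))) \<partial>D)"
    unfolding G_def by (rule P.product_nn_integral_prod) auto
  also have "\<dots> \<le> (\<Prod>l\<in>{..<M}. ennreal (exp (\<theta>\<^sup>2 * K2)))"
    by (intro prod_mono_ennreal) (unfold m_def K2_def, rule mgf_bound[OF D fm eta K(1) _ th1], use K in auto)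
  also have "\<dots> = ennreal (exp (\<theta>\<^sup>2 * K2) ^ M)" by (simp add: ennreal_power)
  finally have E1: "emeasure ?O A \<le> ennreal c * ennreal (exp (\<theta>\<^sup>2 * K2) ^ M)"
    by (simp add: mult_left_mono)
  then have "emeasure ?O A \<le> ennreal (c * exp (\<theta>\<^sup>2 * K2) ^ M)"
    using c0 by (simp add: ennreal_mult)
  then have "measure ?O A \<le> c * exp (\<theta>\<^sup>2 * K2) ^ M"
    using c0 by (simp add: P.emeasure_eq_measure)
  also have "c * exp (\<theta>\<^sup>2 * K2) ^ M = exp (real M * (\<theta>\<^sup>2 * K2 - \<theta> * \<tau>))"
    unfolding c_def by (simp add: exp_of_nat_mult[symmetric] exp_add[symmetric] algebra_simps)
  also have "\<dots> \<le> exp (- (real M * bcst \<eta> K * min \<tau> (\<tau>\<^sup>2)))"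
  proof -
    have "\<theta>\<^sup>2 * K2 - \<theta> * \<tau> \<le> - (min (1/(4*K2)) (\<eta>/8) * min \<tau> (\<tau>\<^sup>2))"
      by (rule chernoff_arith[OF K2 eta tau \<theta>_def])
    then have "real M * (\<theta>\<^sup>2 * K2 - \<theta> * \<tau>) \<le> real M * (- (bcst \<eta> K * min \<tau> (\<tau>\<^sup>2)))"
      unfolding bcst_def K2_def by (intro mult_left_mono) auto
    then show ?thesis by simp
  qed
  finally show ?thesis unfolding A_def m_def .
qed

lemma two_tail:
  fixes D :: "'a measure" and f :: "'a \<Rightarrow> real"
  assumes D: "prob_space D" and fm[measurable]: "f \<in> borel_measurable D" and eta: "\<eta> > 0"
    and K: "(\<integral>\<^sup>+x. ennreal (exp (\<eta> * \<bar>f x\<bar>)) \<partial>D) \<le> ennreal K" "K \<ge> 1"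
    and M: "M \<ge> 1" and tau: "\<tau> > 0"
  shows "measure (\<Pi>\<^sub>M l\<in>{..<M}. D) {w \<in> space (\<Pi>\<^sub>M l\<in>{..<M}. D).
            \<tau> < \<bar>(\<Sum>l<M. f (w l)) / real M - (\<integral>x. f x \<partial>D)\<bar>}
         \<le> 2 * exp (- (real M * bcst \<eta> K * min \<tau> (\<tau>\<^sup>2)))"
proof -
  let ?O = "\<Pi>\<^sub>M l\<in>{..<M}. D"
  let ?A = "{w \<in> space ?O. \<tau> < (\<Sum>l<M. f (w l)) / real M - (\<integral>x. f x \<partial>D)}"
  let ?B = "{w \<in> space ?O. \<tau> < (\<Sum>l<M. - f (w l)) / real M - (\<integral>x. - f x \<partial>D)}"
  have eq: "{w \<in> space ?O. \<tau> < \<bar>(\<Sum>l<M. f (w l)) / real M - (\<integral>x. f x \<partial>D)\<bar>} = ?A \<union> ?B"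
    by (auto simp: sum_negf abs_if)
  have Am: "?A \<in> sets ?O" by measurable
  have Bm: "?B \<in> sets ?O" by measurable
  have "measure ?O (?A \<union> ?B) \<le> measure ?O ?A + measure ?O ?B" by (rule measure_Un_le[OF Am Bm])
  also have "\<dots> \<le> exp (- (real M * bcst \<eta> K * min \<tau> (\<tau>\<^sup>2))) + exp (- (real M * bcst \<eta> K * min \<tau> (\<tau>\<^sup>2)))"
    by (intro add_mono upper_tail[OF D _ eta _ K(2) M tau]) (use K(1) in auto)
  finally show ?thesis unfolding eq by simp
qed

definition Zset :: "'i set \<Rightarrow> nat \<Rightarrow> ('i \<Rightarrow> int) set" where
  "Zset I L = {z. (\<forall>r. r \<notin> I \<longrightarrow> z r = 0) \<and> (\<Sum>r\<in>I. \<bar>z r\<bar>) \<le> int L}"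

lemma geo3: "(\<Sum>n\<le>L. 2 * 3 ^ (L - n)) < (3::nat) ^ (L + 1)"
proof (induction L)
  case 0 then show ?case by simp
next
  case (Suc L)
  have "(\<Sum>n\<le>Suc L. 2 * 3 ^ (Suc L - n)) = (\<Sum>n\<le>L. 2 * 3 ^ (Suc L - n)) + (2::nat)"
    by simp
  also have "(\<Sum>n\<le>L. 2 * 3 ^ (Suc L - n)) = 3 * (\<Sum>n\<le>L. 2 * 3 ^ (L - n)::nat)"
    by (simp add: sum_distrib_left Suc_diff_le)
  finally show ?case using Suc.IH by simp
qed

lemma Zset_empty: "Zset {} L = {\<lambda>_. 0}"
  unfolding Zset_def by auto

lemma Zset_insert_sub:
  assumes "i \<notin> I" "finite I"
  shows "Zset (insert i I) L \<subseteq> (\<Union>n\<in>{..L}. \<Union>s\<in>{1, -1}. (\<lambda>z. z(i := s * int n)) ` Zset I (L - n))"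
proof
  fix z assume z: "z \<in> Zset (insert i I) L"
  define n where "n = nat \<bar>z i\<bar>"
  define s :: int where "s = (if z i \<ge> 0 then 1 else -1)"
  define z' where "z' = z(i := 0)"
  have sum: "(\<Sum>r\<in>insert i I. \<bar>z r\<bar>) = \<bar>z i\<bar> + (\<Sum>r\<in>I. \<bar>z r\<bar>)" using assms by simp
  have s0: "0 \<le> (\<Sum>r\<in>I. \<bar>z r\<bar>)" by (rule sum_nonneg) simp
  have "(\<Sum>r\<in>insert i I. \<bar>z r\<bar>) \<le> int L" using z unfolding Zset_def by auto
  then have "\<bar>z i\<bar> \<le> int L" using sum s0 by linarith
  then have nL: "n \<le> L" unfolding n_def by auto
  have "(\<Sum>r\<in>I. \<bar>z' r\<bar>) = (\<Sum>r\<in>I. \<bar>z r\<bar>)" unfolding z'_def using assms by (intro sum.cong) auto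
  then have "z' \<in> Zset I (L - n)" using z sum nL unfolding Zset_def z'_def n_def by auto
  moreover have "z = z'(i := s * int n)" unfolding z'_def s_def n_def by (auto simp: fun_eq_iff)
  ultimately show "z \<in> (\<Union>n\<in>{..L}. \<Union>s\<in>{1, -1}. (\<lambda>z. z(i := s * int n)) ` Zset I (L - n))"
    using nL unfolding s_def by (cases "z i \<ge> 0") auto
qed

lemma Zset_card: "finite I \<Longrightarrow> finite (Zset I L) \<and> card (Zset I L) \<le> 3 ^ (L + card I)"
proof (induction I arbitrary: L rule: finite_induct)
  case empty then show ?case by (simp add: Zset_empty)
next
  case (insert i I)
  let ?U = "\<Union>n\<in>{..L}. \<Union>s\<in>{1, -1::int}. (\<lambda>z. z(i := s * int n)) ` Zset I (L - n)"
  have sub: "Zset (insert i I) L \<subseteq> ?U" by (rule Zset_insert_sub) (use insert in auto)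
  have finU: "finite ?U" using insert.IH by auto
  have "card ?U \<le> (\<Sum>n\<in>{..L}. card (\<Union>s\<in>{1, -1::int}. (\<lambda>z. z(i := s * int n)) ` Zset I (L - n)))"
    by (rule card_UN_le) simp
  also have "\<dots> \<le> (\<Sum>n\<in>{..L}. 2 * 3 ^ (L - n + card I))"
  proof (rule sum_mono)
    fix n assume "n \<in> {..L}"
    have "card (\<Union>s\<in>{1, -1::int}. (\<lambda>z. z(i := s * int n)) ` Zset I (L - n)) \<le>
        (\<Sum>s\<in>{1, -1::int}. card ((\<lambda>z. z(i := s * int n)) ` Zset I (L - n)))"
      by (rule card_UN_le) simp
    also have "\<dots> \<le> (\<Sum>s\<in>{1, -1::int}. card (Zset I (L - n)))"
      by (intro sum_mono card_image_le) (use insert.IH in auto)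
    also have "\<dots> = 2 * card (Zset I (L - n))" by simp
    also have "\<dots> \<le> 2 * 3 ^ (L - n + card I)" using insert.IH by simp
    finally show "card (\<Union>s\<in>{1, -1::int}. (\<lambda>z. z(i := s * int n)) ` Zset I (L - n)) \<le> 2 * 3 ^ (L - n + card I)" .
  qed
  also have "\<dots> = (\<Sum>n\<in>{..L}. 2 * 3 ^ (L - n)) * 3 ^ card I"
    unfolding sum_distrib_right by (intro sum.cong refl) (simp only: power_add mult.assoc)
  also have "\<dots> \<le> 3 ^ (L + 1) * 3 ^ card I"
    using geo3[of L] by (intro mult_right_mono) auto
  also have "\<dots> = 3 ^ (L + card (insert i I))" using insert by (simp add: power_add)
  finally have "card ?U \<le> 3 ^ (L + card (insert i I))" .
  then show ?case using sub finU by (meson card_mono finite_subset order_trans)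
qed

definition nv :: "'i set \<Rightarrow> ('i \<Rightarrow> real) \<Rightarrow> real" where
  "nv I v = sqrt (\<Sum>r\<in>I. (v r)\<^sup>2)"
definition Amul :: "'i set \<Rightarrow> ('i \<Rightarrow> 'i \<Rightarrow> real) \<Rightarrow> ('i \<Rightarrow> real) \<Rightarrow> 'i \<Rightarrow> real" where
  "Amul I A v r = (\<Sum>s\<in>I. A r s * v s)"
definition bil :: "'i set \<Rightarrow> ('i \<Rightarrow> 'i \<Rightarrow> real) \<Rightarrow> ('i \<Rightarrow> real) \<Rightarrow> ('i \<Rightarrow> real) \<Rightarrow> real" where
  "bil I A a b = (\<Sum>r\<in>I. a r * Amul I A b r)"
definition dlt :: "'i set \<Rightarrow> real" where
  "dlt I = 1 / (4 * sqrt (card I))"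
definition rnd :: "'i set \<Rightarrow> ('i \<Rightarrow> real) \<Rightarrow> 'i \<Rightarrow> real" where
  "rnd I x r = (if r \<in> I then dlt I * of_int (round (x r / dlt I)) else 0)"
definition net :: "'i set \<Rightarrow> ('i \<Rightarrow> real) set" where
  "net I = rnd I ` {x. (\<Sum>r\<in>I. (x r)\<^sup>2) = 1}"

lemma CS_abs: "\<bar>\<Sum>r\<in>I. a r * b r\<bar> \<le> nv I a * nv I b"
proof -
  have "(\<Sum>r\<in>I. a r * b r)\<^sup>2 \<le> (\<Sum>r\<in>I. (a r)\<^sup>2) * (\<Sum>r\<in>I. (b r)\<^sup>2)"
    by (rule Cauchy_Schwarz_ineq_sum)
  then have "sqrt ((\<Sum>r\<in>I. a r * b r)\<^sup>2) \<le> sqrt ((\<Sum>r\<in>I. (a r)\<^sup>2) * (\<Sum>r\<in>I. (b r)\<^sup>2))"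
    by (rule real_sqrt_le_mono)
  then show ?thesis unfolding nv_def by (simp add: real_sqrt_mult)
qed

lemma nv_nonneg: "0 \<le> nv I v" unfolding nv_def by (simp add: sum_nonneg)

lemma dlt_pos: "finite I \<Longrightarrow> I \<noteq> {} \<Longrightarrow> dlt I > 0"
  unfolding dlt_def by (simp add: card_gt_0_iff)

lemma dlt_sq: "finite I \<Longrightarrow> I \<noteq> {} \<Longrightarrow> real (card I) * (dlt I)\<^sup>2 = 1/16"
  unfolding dlt_def by (simp add: power_divide power_mult_distrib card_gt_0_iff)

lemma scale_abs: "(d::real) > 0 \<Longrightarrow> d * \<bar>q - y / d\<bar> = \<bar>y - d * q\<bar>"
proof -
  assume d: "d > 0"
  have "\<bar>y - d * q\<bar> = \<bar>d * (y / d - q)\<bar>" using d by (simp add: right_diff_distrib)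
  also have "\<dots> = d * \<bar>y / d - q\<bar>" using d by (simp add: abs_mult)
  finally show ?thesis by (simp add: abs_minus_commute)
qed

lemma rnd_err: "finite I \<Longrightarrow> I \<noteq> {} \<Longrightarrow> r \<in> I \<Longrightarrow> \<bar>x r - rnd I x r\<bar> \<le> dlt I / 2"
proof -
  assume a: "finite I" "I \<noteq> {}" "r \<in> I"
  let ?d = "dlt I"
  have d: "?d > 0" using dlt_pos a by auto
  have "\<bar>of_int (round (x r / ?d)) - x r / ?d\<bar> \<le> 1/2" by (rule of_int_round_abs_le)
  then have "?d * \<bar>of_int (round (x r / ?d)) - x r / ?d\<bar> \<le> ?d * (1/2)" using d by (intro mult_left_mono) auto
  moreover have "?d * \<bar>of_int (round (x r / ?d)) - x r / ?d\<bar> = \<bar>x r - rnd I x r\<bar>"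
    using d a unfolding rnd_def by (simp add: scale_abs)
  ultimately show ?thesis by simp
qed

lemma rnd_close:
  assumes "finite I" "I \<noteq> {}"
  shows "nv I (\<lambda>r. x r - rnd I x r) \<le> 1/8"
proof -
  have "(\<Sum>r\<in>I. (x r - rnd I x r)\<^sup>2) \<le> (\<Sum>r\<in>I. (dlt I / 2)\<^sup>2)"
  proof (rule sum_mono)
    fix r assume "r \<in> I"
    then have "\<bar>x r - rnd I x r\<bar> \<le> dlt I / 2" by (rule rnd_err[OF assms])
    then have "\<bar>x r - rnd I x r\<bar>\<^sup>2 \<le> (dlt I / 2)\<^sup>2" by (rule power_mono) simp
    then show "(x r - rnd I x r)\<^sup>2 \<le> (dlt I / 2)\<^sup>2" by simp
  qed
  also have "\<dots> = real (card I) * (dlt I)\<^sup>2 / 4" by (simp add: power_divide)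
  also have "\<dots> = (1/8)\<^sup>2" using dlt_sq[OF assms] by (simp add: power2_eq_square mult_ac)
  finally have "sqrt (\<Sum>r\<in>I. (x r - rnd I x r)\<^sup>2) \<le> sqrt ((1/8)\<^sup>2)" by (rule real_sqrt_le_mono)
  then show ?thesis unfolding nv_def by simp
qed

lemma nv_sq: "(nv I v)\<^sup>2 = (\<Sum>r\<in>I. (v r)\<^sup>2)"
  unfolding nv_def by (simp add: sum_nonneg)

lemma nv_scale: "nv I (\<lambda>r. c * f r) = \<bar>c\<bar> * nv I f"
  unfolding nv_def by (simp add: power_mult_distrib sum_distrib_left[symmetric] real_sqrt_mult)

lemma rnd_norm:
  assumes "finite I" "I \<noteq> {}" "(\<Sum>r\<in>I. (x r)\<^sup>2) = 1"
  shows "nv I (rnd I x) \<le> 2"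
proof -
  have e: "(\<Sum>r\<in>I. (x r - rnd I x r)\<^sup>2) \<le> 1/64"
  proof -
    have "(nv I (\<lambda>r. x r - rnd I x r))\<^sup>2 \<le> (1/8)\<^sup>2"
      using rnd_close[OF assms(1,2)] nv_nonneg by (intro power_mono) auto
    then show ?thesis unfolding nv_sq by (simp add: power2_eq_square)
  qed
  have "(\<Sum>r\<in>I. (rnd I x r)\<^sup>2) \<le> (\<Sum>r\<in>I. 2 * (x r)\<^sup>2 + 2 * (x r - rnd I x r)\<^sup>2)"
  proof (rule sum_mono)
    fix r
    have "0 \<le> (x r + (x r - rnd I x r))\<^sup>2" by simp
    then show "(rnd I x r)\<^sup>2 \<le> 2 * (x r)\<^sup>2 + 2 * (x r - rnd I x r)\<^sup>2"
      by (simp add: power2_eq_square algebra_simps)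
  qed
  also have "\<dots> = 2 * (\<Sum>r\<in>I. (x r)\<^sup>2) + 2 * (\<Sum>r\<in>I. (x r - rnd I x r)\<^sup>2)"
    by (simp add: sum.distrib sum_distrib_left)
  also have "\<dots> \<le> 2\<^sup>2" using assms(3) e by simp
  finally have "sqrt (\<Sum>r\<in>I. (rnd I x r)\<^sup>2) \<le> sqrt (2\<^sup>2)" by (rule real_sqrt_le_mono)
  then show ?thesis unfolding nv_def by simp
qed

lemma sum_abs_le_sqrt:
  assumes "(\<Sum>r\<in>I. (x r)\<^sup>2) = 1"
  shows "(\<Sum>r\<in>I. \<bar>x r\<bar>) \<le> sqrt (real (card I))"
proof -
  have "\<bar>\<Sum>r\<in>I. 1 * \<bar>x r\<bar>\<bar> \<le> nv I (\<lambda>_. 1) * nv I (\<lambda>r. \<bar>x r\<bar>)" by (rule CS_abs)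
  moreover have "nv I (\<lambda>_. 1) = sqrt (real (card I))" unfolding nv_def by simp
  moreover have "nv I (\<lambda>r. \<bar>x r\<bar>) = 1" unfolding nv_def using assms by simp
  ultimately show ?thesis by simp
qed

lemma net_sub:
  assumes "finite I" "I \<noteq> {}"
  shows "net I \<subseteq> (\<lambda>z r. dlt I * of_int (z r)) ` Zset I (5 * card I)"
proof
  fix u assume "u \<in> net I"
  then obtain x where x: "(\<Sum>r\<in>I. (x r)\<^sup>2) = 1" and u: "u = rnd I x" unfolding net_def by auto
  let ?d = "dlt I"
  have d: "?d > 0" using dlt_pos assms by auto
  define z where "z r = (if r \<in> I then round (x r / ?d) else 0)" for r
  have "u = (\<lambda>r. ?d * of_int (z r))" unfolding u z_def rnd_def by auto
  moreover have "z \<in> Zset I (5 * card I)"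
  proof -
    have "(\<Sum>r\<in>I. real_of_int \<bar>z r\<bar>) \<le> (\<Sum>r\<in>I. \<bar>x r\<bar> / ?d + 1/2)"
    proof (rule sum_mono)
      fix r assume r: "r \<in> I"
      have "\<bar>of_int (round (x r / ?d)) - x r / ?d\<bar> \<le> 1/2" by (rule of_int_round_abs_le)
      then have "\<bar>real_of_int (round (x r / ?d))\<bar> \<le> \<bar>x r / ?d\<bar> + 1/2" by linarith
      then show "real_of_int \<bar>z r\<bar> \<le> \<bar>x r\<bar> / ?d + 1/2" using r d unfolding z_def by simp
    qed
    also have "\<dots> = (\<Sum>r\<in>I. \<bar>x r\<bar>) / ?d + real (card I) / 2"
      by (simp add: sum.distrib sum_divide_distrib)
    also have "\<dots> \<le> sqrt (real (card I)) / ?d + real (card I) / 2"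
      using sum_abs_le_sqrt[OF x] d by (simp add: divide_right_mono)
    also have "sqrt (real (card I)) / ?d = 4 * real (card I)"
      unfolding dlt_def using assms by (simp add: card_gt_0_iff)
    also have "4 * real (card I) + real (card I) / 2 \<le> real (5 * card I)" by simp
    finally have "real_of_int (\<Sum>r\<in>I. \<bar>z r\<bar>) \<le> real (5 * card I)" by simp
    then have "(\<Sum>r\<in>I. \<bar>z r\<bar>) \<le> int (5 * card I)" by linarith
    then show ?thesis unfolding Zset_def z_def by auto
  qed
  ultimately show "u \<in> (\<lambda>z r. dlt I * of_int (z r)) ` Zset I (5 * card I)" by blast
qed

lemma net_card:
  assumes "finite I" "I \<noteq> {}"
  shows "finite (net I) \<and> card (net I) \<le> 3 ^ (6 * card I)"
proof -
  have fz: "finite (Zset I (5 * card I))" and cz0: "card (Zset I (5 * card I)) \<le> 3 ^ (5 * card I + card I)"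
    using Zset_card[OF assms(1), of "5 * card I"] by auto
  have "5 * card I + card I = 6 * card I" by simp
  then have cz: "card (Zset I (5 * card I)) \<le> 3 ^ (6 * card I)" using cz0 by metis
  have fi: "finite ((\<lambda>z r. dlt I * of_int (z r)) ` Zset I (5 * card I))" using fz by simp
  have "card (net I) \<le> card ((\<lambda>z r. dlt I * of_int (z r)) ` Zset I (5 * card I))"
    by (rule card_mono[OF fi net_sub[OF assms]])
  also have "\<dots> \<le> card (Zset I (5 * card I))" by (rule card_image_le[OF fz])
  finally show ?thesis using cz finite_subset[OF net_sub[OF assms] fi] by simp
qed

lemma opnorm_alt: "opnorm I A = Sup {nv I (Amul I A v) | v. (\<Sum>s\<in>I. (v s)\<^sup>2) = 1}"
  unfolding opnorm_def nv_def Amul_def ..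

lemma Amul_bound: "nv I (Amul I A v) \<le> sqrt (\<Sum>r\<in>I. \<Sum>s\<in>I. (A r s)\<^sup>2)" if "(\<Sum>s\<in>I. (v s)\<^sup>2) = 1"
proof -
  have "(\<Sum>r\<in>I. (Amul I A v r)\<^sup>2) \<le> (\<Sum>r\<in>I. \<Sum>s\<in>I. (A r s)\<^sup>2)"
  proof (rule sum_mono)
    fix r
    have "(Amul I A v r)\<^sup>2 \<le> (\<Sum>s\<in>I. (A r s)\<^sup>2) * (\<Sum>s\<in>I. (v s)\<^sup>2)"
      unfolding Amul_def by (rule Cauchy_Schwarz_ineq_sum)
    then show "(Amul I A v r)\<^sup>2 \<le> (\<Sum>s\<in>I. (A r s)\<^sup>2)" using that by simp
  qed
  then show ?thesis unfolding nv_def by (rule real_sqrt_le_mono)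
qed

lemma unit_exists: "finite I \<Longrightarrow> I \<noteq> {} \<Longrightarrow> \<exists>v. (\<Sum>s\<in>I. (v s)\<^sup>2) = (1::real)"
proof -
  assume "finite I" "I \<noteq> {}"
  then obtain i where i: "i \<in> I" by auto
  have "(\<Sum>s\<in>I. ((\<lambda>s. if s = i then 1 else 0::real) s)\<^sup>2) = (\<Sum>s\<in>I. if s = i then 1 else 0::real)"
    by (rule sum.cong) auto
  also have "\<dots> = 1" using i \<open>finite I\<close> by simp
  finally have "(\<Sum>s\<in>I. ((\<lambda>s. if s = i then 1 else 0::real) s)\<^sup>2) = 1" .
  then show ?thesis by (intro exI[where x="\<lambda>s. if s = i then 1 else 0::real"]) simp
qed

lemma opnorm_upper:
  assumes "(\<Sum>s\<in>I. (v s)\<^sup>2) = 1"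
  shows "nv I (Amul I A v) \<le> opnorm I A"
  unfolding opnorm_alt
  by (rule cSup_upper) (use assms in \<open>auto intro!: bdd_aboveI[where M="sqrt (\<Sum>r\<in>I. \<Sum>s\<in>I. (A r s)\<^sup>2)"] Amul_bound\<close>)

lemma opnorm_least:
  assumes "finite I" "I \<noteq> {}" "\<And>v. (\<Sum>s\<in>I. (v s)\<^sup>2) = 1 \<Longrightarrow> nv I (Amul I A v) \<le> B"
  shows "opnorm I A \<le> B"
  unfolding opnorm_alt
  by (rule cSup_least) (use assms unit_exists[OF assms(1,2)] in auto)

lemma opnorm_nonneg: "finite I \<Longrightarrow> I \<noteq> {} \<Longrightarrow> 0 \<le> opnorm I A"
  using unit_exists opnorm_upper nv_nonneg order_trans by metis

lemma Amul_scale: "Amul I A (\<lambda>s. c * w s) = (\<lambda>r. c * Amul I A w r)"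
  unfolding Amul_def by (simp add: sum_distrib_left mult_ac)

lemma Amul_diff: "Amul I A (\<lambda>s. a s - b s) = (\<lambda>r. Amul I A a r - Amul I A b r)"
  unfolding Amul_def by (simp add: sum_subtractf right_diff_distrib)

lemma opnorm_scaled:
  assumes "finite I" "I \<noteq> {}"
  shows "nv I (Amul I A w) \<le> opnorm I A * nv I w"
proof (cases "nv I w = 0")
  case True
  then have "(\<Sum>s\<in>I. (w s)\<^sup>2) = 0" unfolding nv_def by simp
  then have "\<forall>s\<in>I. w s = 0" using assms(1) by (simp add: sum_nonneg_eq_0_iff)
  then have "Amul I A w = (\<lambda>r. 0)" unfolding Amul_def by (simp add: fun_eq_iff)
  then show ?thesis using True by (simp add: nv_def)
next
  case False
  define c where "c = nv I w"
  have c: "c > 0" using False nv_nonneg c_def by (metis less_eq_real_def)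
  define v where "v s = w s / c" for s
  have "(\<Sum>s\<in>I. (v s)\<^sup>2) = (\<Sum>s\<in>I. (w s)\<^sup>2) / c\<^sup>2" unfolding v_def
    by (simp add: power_divide sum_divide_distrib)
  also have "\<dots> = 1" using c by (simp add: nv_sq[of I w, folded c_def, symmetric])
  finally have vu: "(\<Sum>s\<in>I. (v s)\<^sup>2) = 1" .
  have "w = (\<lambda>s. c * v s)" using c unfolding v_def by auto
  then have "nv I (Amul I A w) = c * nv I (Amul I A v)"
    using c by (simp add: Amul_scale nv_scale)
  also have "\<dots> \<le> c * opnorm I A" using opnorm_upper[OF vu] c by simp
  finally show ?thesis unfolding c_def by (simp add: mult.commute)
qed

lemma bil_bound:
  assumes "finite I" "I \<noteq> {}"
  shows "\<bar>bil I A a b\<bar> \<le> nv I a * opnorm I A * nv I b"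
proof -
  have "\<bar>bil I A a b\<bar> \<le> nv I a * nv I (Amul I A b)" unfolding bil_def by (rule CS_abs)
  also have "\<dots> \<le> nv I a * (opnorm I A * nv I b)"
    by (rule mult_left_mono[OF opnorm_scaled[OF assms] nv_nonneg])
  finally show ?thesis by (simp add: mult.assoc)
qed

lemma bil_split:
  "bil I A x y = bil I A u v + bil I A (\<lambda>r. x r - u r) y + bil I A u (\<lambda>r. y r - v r)"
  unfolding bil_def Amul_diff by (simp add: sum_subtractf algebra_simps sum.distrib)

lemma net_bound:
  assumes I: "finite I" "I \<noteq> {}"
    and T: "\<And>u v. u \<in> net I \<Longrightarrow> v \<in> net I \<Longrightarrow> \<bar>bil I A u v\<bar> \<le> T"
  shows "opnorm I A \<le> 3 * T"
proof -
  let ?B = "opnorm I A"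
  have B0: "0 \<le> ?B" by (rule opnorm_nonneg[OF I])
  obtain x0 where x0: "(\<Sum>s\<in>I. (x0 s)\<^sup>2) = (1::real)" using unit_exists[OF I] by blast
  have "rnd I x0 \<in> net I" unfolding net_def using x0 by auto
  then have T0: "0 \<le> T" using T by (meson abs_ge_zero order_trans)
  have key: "nv I (Amul I A y) \<le> T + 3/8 * ?B" if y: "(\<Sum>s\<in>I. (y s)\<^sup>2) = 1" for y
  proof -
    define z where "z = Amul I A y"
    define Ny where "Ny = nv I z"
    show ?thesis
    proof (cases "Ny = 0")
      case True
      then show ?thesis using T0 B0 unfolding Ny_def z_def by simp
    next
      case False
      then have Ny: "Ny > 0" using nv_nonneg Ny_def by (metis less_eq_real_def)
      define x where "x r = z r / Ny" for r
      have xu: "(\<Sum>r\<in>I. (x r)\<^sup>2) = 1"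
      proof -
        have "(\<Sum>r\<in>I. (x r)\<^sup>2) = (\<Sum>r\<in>I. (z r)\<^sup>2) / Ny\<^sup>2" unfolding x_def
          by (simp add: power_divide sum_divide_distrib)
        also have "\<dots> = 1" using Ny by (simp add: nv_sq[of I z, folded Ny_def, symmetric])
        finally show ?thesis .
      qed
      have bxy: "bil I A x y = Ny"
      proof -
        have "bil I A x y = (\<Sum>r\<in>I. (z r)\<^sup>2) / Ny" unfolding bil_def x_def z_def
          by (simp add: sum_divide_distrib power2_eq_square)
        also have "\<dots> = Ny\<^sup>2 / Ny" unfolding Ny_def by (simp add: nv_sq)
        also have "\<dots> = Ny" using Ny by (simp add: power2_eq_square)
        finally show ?thesis .
      qed
      define u where "u = rnd I x"
      define v where "v = rnd I y"
      have un: "u \<in> net I" unfolding u_def net_def using xu by auto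
      have vn: "v \<in> net I" unfolding v_def net_def using y by auto
      have nvy: "nv I y = 1" unfolding nv_def using y by simp
      have e1: "\<bar>bil I A (\<lambda>r. x r - u r) y\<bar> \<le> 1/8 * ?B"
      proof -
        have "\<bar>bil I A (\<lambda>r. x r - u r) y\<bar> \<le> nv I (\<lambda>r. x r - u r) * ?B * nv I y" by (rule bil_bound[OF I])
        also have "\<dots> \<le> 1/8 * ?B * 1" unfolding nvy
          using rnd_close[OF I, of x] B0 unfolding u_def by (intro mult_right_mono) auto
        finally show ?thesis by simp
      qed
      have e2: "\<bar>bil I A u (\<lambda>r. y r - v r)\<bar> \<le> 2 * ?B * (1/8)"
      proof -
        have "\<bar>bil I A u (\<lambda>r. y r - v r)\<bar> \<le> nv I u * ?B * nv I (\<lambda>r. y r - v r)" by (rule bil_bound[OF I])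
        also have "\<dots> \<le> 2 * ?B * (1/8)"
          using rnd_norm[OF I xu] rnd_close[OF I, of y] B0 nv_nonneg unfolding u_def v_def
          by (intro mult_mono) auto
        finally show ?thesis .
      qed
      have "Ny = bil I A u v + bil I A (\<lambda>r. x r - u r) y + bil I A u (\<lambda>r. y r - v r)"
        using bil_split bxy by metis
      also have "\<dots> \<le> T + 1/8 * ?B + 2 * ?B * (1/8)"
        using T[OF un vn] e1 e2 by linarith
      finally show ?thesis unfolding Ny_def z_def by simp
    qed
  qed
  have "?B \<le> T + 3/8 * ?B" by (rule opnorm_least[OF I key])
  then show ?thesis using T0 by linarith
qed

definition Ssum :: "nat \<Rightarrow> nat \<Rightarrow> (nat \<Rightarrow> nat \<Rightarrow> real) \<Rightarrow> (nat \<Rightarrow> real) \<Rightarrow> real" where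
  "Ssum k d x Y = (\<Sum>c<k. exp (dotp d (x c) Y))"
definition sm :: "nat \<Rightarrow> nat \<Rightarrow> (nat \<Rightarrow> nat \<Rightarrow> real) \<Rightarrow> (nat \<Rightarrow> real) \<Rightarrow> nat \<Rightarrow> real" where
  "sm k d x Y c = exp (dotp d (x c) Y) / Ssum k d x Y"
definition gL :: "nat \<Rightarrow> nat \<Rightarrow> (nat \<Rightarrow> nat \<Rightarrow> real) \<Rightarrow> nat \<times> (nat \<Rightarrow> real) \<Rightarrow> nat \<Rightarrow> nat \<Rightarrow> real" where
  "gL k d x z c i = snd z i * (sm k d x (snd z) c - (if fst z = c then 1 else 0))"
definition hL :: "nat \<Rightarrow> nat \<Rightarrow> (nat \<Rightarrow> nat \<Rightarrow> real) \<Rightarrow> nat \<times> (nat \<Rightarrow> real) \<Rightarrow> nat \<Rightarrow> nat \<Rightarrow> nat \<Rightarrow> nat \<Rightarrow> real" where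
  "hL k d x z c i c' j = snd z i * snd z j *
     (sm k d x (snd z) c * (if c = c' then 1 else 0) - sm k d x (snd z) c * sm k d x (snd z) c')"

lemma dotp_upd:
  assumes "i < d"
  shows "dotp d ((x(c := (x c)(i := t))) c') Y =
     dotp d (x c') Y + (if c' = c then (t - x c i) * Y i else 0)"
proof (cases "c' = c")
  case True
  have "dotp d ((x c)(i := t)) Y = (\<Sum>j<d. x c j * Y j) + (t - x c i) * Y i"
  proof -
    have "(\<Sum>j<d. ((x c)(i := t)) j * Y j) = (\<Sum>j<d. x c j * Y j + (if j = i then (t - x c i) * Y i else 0))"
      by (rule sum.cong) (auto simp: algebra_simps)
    also have "\<dots> = (\<Sum>j<d. x c j * Y j) + (t - x c i) * Y i"
      using assms by (simp add: sum.distrib)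
    finally show ?thesis unfolding dotp_def .
  qed
  then show ?thesis using True by (simp add: dotp_def)
next
  case False then show ?thesis by simp
qed

lemma Ssum_pos: "k > 0 \<Longrightarrow> Ssum k d x Y > 0"
  unfolding Ssum_def by (intro sum_pos) auto

lemma sm_nonneg: "0 \<le> sm k d x Y c"
  unfolding sm_def Ssum_def by (intro divide_nonneg_nonneg sum_nonneg) auto

lemma sum_sm: "k > 0 \<Longrightarrow> (\<Sum>c<k. sm k d x Y c) = 1"
  using Ssum_pos[of k d x Y] unfolding sm_def by (simp add: sum_divide_distrib[symmetric] Ssum_def)

lemma G_DERIV:
  assumes "c < k" "i < d"
  shows "((\<lambda>t. loss k d (x(c := (x c)(i := t))) z) has_real_derivative gL k d x z c i) (at (x c i))"
proof -
  obtain a Y where z: "z = (a, Y)" by (cases z)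
  let ?t0 = "x c i"
  define E where "E c' t = exp (dotp d (x c') Y + (if c' = c then (t - ?t0) * Y i else 0))" for c' t
  have eq: "loss k d (x(c := (x c)(i := t))) z =
     - (dotp d (x a) Y + (if a = c then (t - ?t0) * Y i else 0)) + ln (\<Sum>c'<k. E c' t)" for t
  proof -
    note e1 = dotp_upd[OF assms(2), of x c t _ Y]
    show ?thesis unfolding loss_def z fst_conv snd_conv e1 E_def by simp
  qed
  have dE: "((\<lambda>t. E c' t) has_real_derivative (if c' = c then E c' t * Y i else 0)) (at t)" for c' t
    unfolding E_def by (auto intro!: derivative_eq_intros)
  have dS: "((\<lambda>t. \<Sum>c'<k. E c' t) has_real_derivative (\<Sum>c'<k. if c' = c then E c' t * Y i else 0)) (at t)" for t
    by (rule DERIV_sum) (rule dE)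
  have S0: "(\<Sum>c'<k. E c' ?t0) = Ssum k d x Y" unfolding E_def Ssum_def by (intro sum.cong) auto
  have Sp: "(\<Sum>c'<k. E c' ?t0) > 0" using S0 Ssum_pos assms by auto
  have dsum: "(\<Sum>c'<k. if c' = c then E c' ?t0 * Y i else 0) = exp (dotp d (x c) Y) * Y i"
    using assms unfolding E_def by simp
  have "((\<lambda>t. - (dotp d (x a) Y + (if a = c then (t - ?t0) * Y i else 0)) + ln (\<Sum>c'<k. E c' t))
      has_real_derivative (- (if a = c then Y i else 0) + (\<Sum>c'<k. if c' = c then E c' ?t0 * Y i else 0) / (\<Sum>c'<k. E c' ?t0))) (at ?t0)"
  proof (rule DERIV_add)
    show "((\<lambda>t. - (dotp d (x a) Y + (if a = c then (t - ?t0) * Y i else 0))) has_real_derivative - (if a = c then Y i else 0)) (at ?t0)"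
      by (cases "a = c") (auto intro!: derivative_eq_intros)
    show "((\<lambda>t. ln (\<Sum>c'<k. E c' t)) has_real_derivative (\<Sum>c'<k. if c' = c then E c' ?t0 * Y i else 0) / (\<Sum>c'<k. E c' ?t0)) (at ?t0)"
      using DERIV_chain2[OF DERIV_ln[OF Sp] dS[of ?t0]] by (simp add: divide_inverse mult.commute)
  qed
  moreover have "- (if a = c then Y i else 0) + (\<Sum>c'<k. if c' = c then E c' ?t0 * Y i else 0) / (\<Sum>c'<k. E c' ?t0)
      = gL k d x z c i"
    unfolding dsum S0 gL_def sm_def z by (auto simp: algebra_simps)
  ultimately show ?thesis unfolding eq by simp
qed

lemma H_DERIV:
  assumes "c < k" "c' < k" "j < d"
  shows "((\<lambda>t. gL k d (x(c' := (x c')(j := t))) z c i) has_real_derivative hL k d x z c i c' j) (at (x c' j))"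
proof -
  obtain a Y where z: "z = (a, Y)" by (cases z)
  let ?t0 = "x c' j"
  define E where "E b t = exp (dotp d (x b) Y + (if b = c' then (t - ?t0) * Y j else 0))" for b t
  have e1: "\<And>b. dotp d ((x(c' := (x c')(j := t))) b) Y = dotp d (x b) Y + (if b = c' then (t - ?t0) * Y j else 0)" for t
    by (rule dotp_upd[OF assms(3)])
  have eq: "gL k d (x(c' := (x c')(j := t))) z c i = Y i * (E c t / (\<Sum>b<k. E b t) - (if a = c then 1 else 0))" for t
    unfolding gL_def sm_def Ssum_def z fst_conv snd_conv e1 E_def ..
  have dE: "((\<lambda>t. E b t) has_real_derivative (if b = c' then E b t * Y j else 0)) (at t)" for b t
    unfolding E_def by (auto intro!: derivative_eq_intros)
  have dS: "((\<lambda>t. \<Sum>b<k. E b t) has_real_derivative (\<Sum>b<k. if b = c' then E b t * Y j else 0)) (at t)" for t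
    by (rule DERIV_sum) (rule dE)
  have S0: "(\<Sum>b<k. E b ?t0) = Ssum k d x Y" unfolding E_def Ssum_def by (intro sum.cong) auto
  have Sp: "(\<Sum>b<k. E b ?t0) > 0" using S0 Ssum_pos assms by auto
  have E0: "E b ?t0 = exp (dotp d (x b) Y)" for b unfolding E_def by simp
  have dsum: "(\<Sum>b<k. if b = c' then E b ?t0 * Y j else 0) = exp (dotp d (x c') Y) * Y j"
    using assms E0 by simp
  have "((\<lambda>t. Y i * (E c t / (\<Sum>b<k. E b t) - (if a = c then 1 else 0))) has_real_derivative
      Y i * (((if c = c' then E c ?t0 * Y j else 0) * (\<Sum>b<k. E b ?t0) - E c ?t0 * (\<Sum>b<k. if b = c' then E b ?t0 * Y j else 0))
         / ((\<Sum>b<k. E b ?t0) * (\<Sum>b<k. E b ?t0)) - 0)) (at ?t0)"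
    by (intro DERIV_cmult DERIV_diff DERIV_divide dE dS DERIV_const) (use Sp in auto)
  moreover have "Y i * (((if c = c' then E c ?t0 * Y j else 0) * (\<Sum>b<k. E b ?t0) - E c ?t0 * (\<Sum>b<k. if b = c' then E b ?t0 * Y j else 0))
         / ((\<Sum>b<k. E b ?t0) * (\<Sum>b<k. E b ?t0)) - 0) = hL k d x z c i c' j"
  proof -
    have S1: "(\<Sum>b<k. exp (dotp d (x b) Y)) = Ssum k d x Y" by (simp add: Ssum_def)
    show ?thesis
      unfolding dsum S0 E0 S1 hL_def sm_def z fst_conv snd_conv using Ssum_pos[of k d x Y] assms
      by (auto simp: field_simps)
  qed
  ultimately show ?thesis unfolding eq by simp
qed

lemma pderiv_emp:
  assumes "c < k" "i < d"
  shows "pderiv (emp_risk M k d w) x (c, i) = (1 / real M) * (\<Sum>l<M. gL k d x (w l) c i)"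
proof -
  have "((\<lambda>t. emp_risk M k d w (x(c := (x c)(i := t)))) has_real_derivative
      (1 / real M) * (\<Sum>l<M. gL k d x (w l) c i)) (at (x c i))"
    unfolding emp_risk_def
    by (intro DERIV_cmult DERIV_sum G_DERIV assms)
  then show ?thesis unfolding pderiv_def by (simp add: DERIV_imp_deriv)
qed

lemma hess_emp:
  assumes "r \<in> idx k d" "s \<in> idx k d"
  shows "hess (emp_risk M k d w) x r s =
     (1 / real M) * (\<Sum>l<M. hL k d x (w l) (fst s) (snd s) (fst r) (snd r))"
proof -
  obtain c i where s: "s = (c, i)" "c < k" "i < d" using assms(2) unfolding idx_def by auto
  obtain c' j where r: "r = (c', j)" "c' < k" "j < d" using assms(1) unfolding idx_def by auto
  have eq: "(\<lambda>x'. pderiv (emp_risk M k d w) x' s) = (\<lambda>x'. (1 / real M) * (\<Sum>l<M. gL k d x' (w l) c i))"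
    unfolding s(1) using pderiv_emp[OF s(2,3)] by auto
  have "((\<lambda>t. (1 / real M) * (\<Sum>l<M. gL k d (x(c' := (x c')(j := t))) (w l) c i)) has_real_derivative
      (1 / real M) * (\<Sum>l<M. hL k d x (w l) c i c' j)) (at (x c' j))"
    by (intro DERIV_cmult DERIV_sum H_DERIV s r)
  then have "pderiv (\<lambda>x'. (1 / real M) * (\<Sum>l<M. gL k d x' (w l) c i)) x r =
     (1 / real M) * (\<Sum>l<M. hL k d x (w l) c i c' j)"
    unfolding pderiv_def r(1) fst_conv snd_conv by (rule DERIV_imp_deriv)
  then show ?thesis unfolding hess_def eq using r s by simp
qed

lemma grad_loss:
  assumes "r \<in> idx k d"
  shows "grad (\<lambda>x'. loss k d x' z) x r = gL k d x z (fst r) (snd r)"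
proof -
  obtain c i where r: "r = (c, i)" "c < k" "i < d" using assms unfolding idx_def by auto
  show ?thesis unfolding grad_def pderiv_def r(1)
    using G_DERIV[OF r(2,3), of x z] by (simp add: DERIV_imp_deriv)
qed

lemma empG_eq:
  assumes "r \<in> idx k d" "s \<in> idx k d"
  shows "emp_G M k d w x r s = (1 / real M) * (\<Sum>l<M. gL k d x (w l) (fst r) (snd r) * gL k d x (w l) (fst s) (snd s))"
  unfolding emp_G_def using grad_loss[OF assms(1)] grad_loss[OF assms(2)] by simp

definition phi :: "'i set \<Rightarrow> ('i \<Rightarrow> 'i \<Rightarrow> 'a \<Rightarrow> real) \<Rightarrow> ('i \<Rightarrow> real) \<Rightarrow> ('i \<Rightarrow> real) \<Rightarrow> 'a \<Rightarrow> real" where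
  "phi I Hm u v z = (\<Sum>r\<in>I. u r * (\<Sum>s\<in>I. Hm r s z * v s))"

lemma ifmul: "(if P then 1 else 0) * (x::real) = (if P then x else 0)"
  "x * (if P then 1 else 0) = (if P then x else 0)" by auto

lemma phi_unit:
  assumes "finite I" "r \<in> I" "s \<in> I"
  shows "phi I Hm (\<lambda>r'. if r' = r then 1 else 0) (\<lambda>s'. if s' = s then 1 else 0) z = Hm r s z"
  unfolding phi_def using assms by (simp add: ifmul)

lemma unit_sq: "finite I \<Longrightarrow> r \<in> I \<Longrightarrow> (\<Sum>r'\<in>I. ((\<lambda>r'. if r' = r then 1 else 0::real) r')\<^sup>2) = 1"
proof -
  assume a: "finite I" "r \<in> I"
  have "(\<Sum>r'\<in>I. ((\<lambda>r'. if r' = r then 1 else 0::real) r')\<^sup>2) = (\<Sum>r'\<in>I. if r' = r then 1 else 0::real)"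
    by (rule sum.cong) auto
  also have "\<dots> = 1" using a by simp
  finally show ?thesis .
qed

lemma integrable_from_exp:
  fixes f :: "'a \<Rightarrow> real"
  assumes D: "prob_space D" and fm: "f \<in> borel_measurable D" and eta: "\<eta> > 0"
    and K: "(\<integral>\<^sup>+x. ennreal (exp (\<eta> * \<bar>f x\<bar>)) \<partial>D) \<le> ennreal K"
  shows "integrable D f"
proof -
  have fm'[measurable]: "f \<in> borel_measurable D" by (rule fm)
  have intE: "integrable D (\<lambda>x. exp (\<eta> * \<bar>f x\<bar>))"
    by (rule integrableI_nonneg) (use le_less_trans[OF K ennreal_less_top] in auto)
  show ?thesis
  proof (rule Bochner_Integration.integrable_bound[of _ "\<lambda>x. exp (\<eta> * \<bar>f x\<bar>) / \<eta>"])
    show "integrable D (\<lambda>x. exp (\<eta> * \<bar>f x\<bar>) / \<eta>)" using intE by simp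
    show "AE x in D. norm (f x) \<le> norm (exp (\<eta> * \<bar>f x\<bar>) / \<eta>)"
    proof (rule AE_I2)
      fix x
      have "\<eta> * \<bar>f x\<bar> \<le> exp (\<eta> * \<bar>f x\<bar>)" using exp_ge_add_one_self[of "\<eta> * \<bar>f x\<bar>"] by linarith
      then show "norm (f x) \<le> norm (exp (\<eta> * \<bar>f x\<bar>) / \<eta>)" using eta by (simp add: field_simps)
    qed
  qed (rule fm)
qed

lemma integral_component:
  fixes g :: "'a \<Rightarrow> real"
  assumes D: "prob_space D" and g: "g \<in> borel_measurable D" and l: "l < M"
  shows "(\<integral>w. g (w l) \<partial>(\<Pi>\<^sub>M l\<in>{..<M}. D)) = (\<integral>z. g z \<partial>D)"
  and "integrable D g \<Longrightarrow> integrable (\<Pi>\<^sub>M l\<in>{..<M}. D) (\<lambda>w. g (w l))"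
proof -
  have dist: "distr (\<Pi>\<^sub>M l\<in>{..<M}. D) D (\<lambda>w. w l) = D"
    by (rule distr_PiM_component) (use D l in auto)
  have m: "(\<lambda>w. w l) \<in> measurable (\<Pi>\<^sub>M l\<in>{..<M}. D) D"
    using measurable_component_singleton[of l "{..<M}" "\<lambda>_. D"] l by simp
  show "(\<integral>w. g (w l) \<partial>(\<Pi>\<^sub>M l\<in>{..<M}. D)) = (\<integral>z. g z \<partial>D)"
    using integral_distr[OF m g] dist by simp
  show "integrable D g \<Longrightarrow> integrable (\<Pi>\<^sub>M l\<in>{..<M}. D) (\<lambda>w. g (w l))"
    using integrable_distr_eq[OF m g] dist by simp
qed

lemma opnorm_cong:
  assumes "\<And>r s. r \<in> I \<Longrightarrow> s \<in> I \<Longrightarrow> A r s = B r s"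
  shows "opnorm I A = opnorm I B"
proof -
  have "(\<Sum>r\<in>I. (\<Sum>s\<in>I. A r s * v s)\<^sup>2) = (\<Sum>r\<in>I. (\<Sum>s\<in>I. B r s * v s)\<^sup>2)" for v
    by (intro sum.cong refl arg_cong[where f="\<lambda>x. x\<^sup>2"]) (simp add: assms)
  then show ?thesis unfolding opnorm_def by simp
qed

lemma net_sq: "finite I \<Longrightarrow> I \<noteq> {} \<Longrightarrow> u \<in> net I \<Longrightarrow> (\<Sum>r\<in>I. (u r)\<^sup>2) \<le> 4"
proof -
  assume a: "finite I" "I \<noteq> {}" "u \<in> net I"
  then obtain x where x: "(\<Sum>r\<in>I. (x r)\<^sup>2) = 1" "u = rnd I x" unfolding net_def by auto
  have "nv I u \<le> 2" using rnd_norm[OF a(1,2) x(1)] x(2) by simp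
  then have "(nv I u)\<^sup>2 \<le> 2\<^sup>2" using nv_nonneg by (intro power_mono) auto
  then show ?thesis by (simp add: nv_sq)
qed

lemma assemble:
  fixes D :: "'a measure" and I :: "'i set" and Hm :: "'i \<Rightarrow> 'i \<Rightarrow> 'a \<Rightarrow> real"
  assumes D: "prob_space D" and I: "finite I" "I \<noteq> {}"
    and Hmeas[measurable]: "\<And>r s. Hm r s \<in> borel_measurable D"
    and mom: "\<And>u v. (\<Sum>r\<in>I. (u r)\<^sup>2) \<le> 4 \<Longrightarrow> (\<Sum>r\<in>I. (v r)\<^sup>2) \<le> 4 \<Longrightarrow>
        (\<integral>\<^sup>+z. ennreal (exp (\<eta> * \<bar>phi I Hm u v z\<bar>)) \<partial>D) \<le> ennreal K"
    and eta: "\<eta> > 0" and K: "K \<ge> 1" and M: "M \<ge> 1" and t: "t > 0"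
  shows "measure (\<Pi>\<^sub>M l\<in>{..<M}. D) {w \<in> space (\<Pi>\<^sub>M l\<in>{..<M}. D).
      t < opnorm I (\<lambda>r s. (1 / real M) * (\<Sum>l<M. Hm r s (w l))
            - (\<integral>w'. (1 / real M) * (\<Sum>l<M. Hm r s (w' l)) \<partial>(\<Pi>\<^sub>M l\<in>{..<M}. D)))}
    \<le> (real (card (net I)))\<^sup>2 * (2 * exp (- (real M * bcst \<eta> K * min (t/3) ((t/3)\<^sup>2))))"
proof -
  let ?O = "\<Pi>\<^sub>M l\<in>{..<M}. D"
  interpret O: prob_space ?O by (rule prob_space_PiM) (use D in auto)
  have phim[measurable]: "phi I Hm u v \<in> borel_measurable D" for u v unfolding phi_def by measurable
  have intH: "integrable D (Hm r s)" if rs: "r \<in> I" "s \<in> I" for r s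
  proof -
    let ?er = "\<lambda>r'. if r' = r then 1 else 0::real" and ?es = "\<lambda>s'. if s' = s then 1 else 0::real"
    have "integrable D (phi I Hm ?er ?es)"
      by (rule integrable_from_exp[OF D phim eta mom]) (use unit_sq[OF I(1)] rs in auto)
    moreover have "phi I Hm ?er ?es = Hm r s" by (rule ext) (rule phi_unit[OF I(1) rs])
    ultimately show ?thesis by simp
  qed
  have EO: "(\<integral>w'. (1 / real M) * (\<Sum>l<M. Hm r s (w' l)) \<partial>?O) = (\<integral>z. Hm r s z \<partial>D)"
    if rs: "r \<in> I" "s \<in> I" for r s
  proof -
    have "(\<integral>w'. (1 / real M) * (\<Sum>l<M. Hm r s (w' l)) \<partial>?O) = (1 / real M) * (\<Sum>l<M. \<integral>w'. Hm r s (w' l) \<partial>?O)"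
    proof -
      have ints: "integrable ?O (\<lambda>w. Hm r s (w l))" if "l \<in> {..<M}" for l
        using integral_component(2)[OF D Hmeas _ intH[OF rs]] that by auto
      have "(\<integral>w'. (\<Sum>l<M. Hm r s (w' l)) \<partial>?O) = (\<Sum>l<M. \<integral>w'. Hm r s (w' l) \<partial>?O)"
        by (rule Bochner_Integration.integral_sum) (rule ints)
      then show ?thesis by simp
    qed
    also have "\<dots> = (1 / real M) * (\<Sum>l<M. \<integral>z. Hm r s z \<partial>D)"
      by (intro arg_cong[where f="\<lambda>x. (1 / real M) * x"] sum.cong refl integral_component(1)[OF D Hmeas]) simp
    also have "\<dots> = (\<integral>z. Hm r s z \<partial>D)" using M by simp
    finally show ?thesis .
  qed
  have intphi: "(\<integral>z. phi I Hm u v z \<partial>D) = (\<Sum>r\<in>I. u r * (\<Sum>s\<in>I. (\<integral>z. Hm r s z \<partial>D) * v s))" for u v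
    unfolding phi_def using intH by (simp add: integral_sum integrable_sum)
  define A where "A w r s = (1 / real M) * (\<Sum>l<M. Hm r s (w l))
            - (\<integral>w'. (1 / real M) * (\<Sum>l<M. Hm r s (w' l)) \<partial>?O)" for w r s
  define A' where "A' w r s = (1 / real M) * (\<Sum>l<M. Hm r s (w l)) - (\<integral>z. Hm r s z \<partial>D)" for w r s
  have AA': "opnorm I (A w) = opnorm I (A' w)" for w
  proof (rule opnorm_cong)
    fix r s assume rs: "r \<in> I" "s \<in> I"
    show "A w r s = A' w r s" unfolding A_def A'_def by (simp only: EO[OF rs])
  qed
  have bilA: "bil I (A' w) u v = (\<Sum>l<M. phi I Hm u v (w l)) / real M - (\<integral>z. phi I Hm u v z \<partial>D)" for w u v
  proof -
    have "bil I (A' w) u v = (\<Sum>r\<in>I. u r * (\<Sum>s\<in>I. ((1 / real M) * (\<Sum>l<M. Hm r s (w l)) - (\<integral>z. Hm r s z \<partial>D)) * v s))"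
      unfolding bil_def Amul_def A'_def ..
    also have "\<dots> = (\<Sum>r\<in>I. u r * (\<Sum>s\<in>I. (1 / real M) * (\<Sum>l<M. Hm r s (w l)) * v s))
        - (\<Sum>r\<in>I. u r * (\<Sum>s\<in>I. (\<integral>z. Hm r s z \<partial>D) * v s))"
      by (simp add: left_diff_distrib sum_subtractf right_diff_distrib)
    also have "(\<Sum>r\<in>I. u r * (\<Sum>s\<in>I. (1 / real M) * (\<Sum>l<M. Hm r s (w l)) * v s)) =
        (\<Sum>l<M. phi I Hm u v (w l)) / real M"
    proof -
      have "(\<Sum>l<M. phi I Hm u v (w l)) = (\<Sum>r\<in>I. \<Sum>l<M. u r * (\<Sum>s\<in>I. Hm r s (w l) * v s))"
        unfolding phi_def by (rule sum.swap)
      also have "\<dots> = (\<Sum>r\<in>I. u r * (\<Sum>s\<in>I. \<Sum>l<M. Hm r s (w l) * v s))"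
        by (simp add: sum_distrib_left[symmetric] sum.swap[of _ "{..<M}"])
      also have "\<dots> = (\<Sum>r\<in>I. u r * (\<Sum>s\<in>I. (\<Sum>l<M. Hm r s (w l)) * v s))"
        by (simp add: sum_distrib_right)
      finally show ?thesis
        by (simp add: sum_divide_distrib sum_distrib_left mult_ac)
    qed
    finally show ?thesis by (simp add: intphi)
  qed
  define E where "E p = {w \<in> space ?O. t/3 < \<bar>(\<Sum>l<M. phi I Hm (fst p) (snd p) (w l)) / real M
      - (\<integral>z. phi I Hm (fst p) (snd p) z \<partial>D)\<bar>}" for p
  have Em: "E p \<in> sets ?O" for p unfolding E_def by measurable
  have fin: "finite (net I \<times> net I)" using net_card[OF I] by auto
  have sub: "{w \<in> space ?O. t < opnorm I (A w)} \<subseteq> (\<Union>p\<in>net I \<times> net I. E p)"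
  proof
    fix w assume w: "w \<in> {w \<in> space ?O. t < opnorm I (A w)}"
    show "w \<in> (\<Union>p\<in>net I \<times> net I. E p)"
    proof (rule ccontr)
      assume nw: "w \<notin> (\<Union>p\<in>net I \<times> net I. E p)"
      have "\<bar>bil I (A' w) u v\<bar> \<le> t/3" if uv: "u \<in> net I" "v \<in> net I" for u v
      proof -
        have "w \<notin> E (u, v)" using nw uv by blast
        moreover have "w \<in> space ?O" using w by simp
        ultimately have "\<not> t/3 < \<bar>(\<Sum>l<M. phi I Hm u v (w l)) / real M - (\<integral>z. phi I Hm u v z \<partial>D)\<bar>"
          unfolding E_def by simp
        then show ?thesis unfolding bilA by simp
      qed
      then have "opnorm I (A' w) \<le> 3 * (t/3)" by (rule net_bound[OF I])
      then show False using w AA'[of w] by simp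
    qed
  qed
  have "measure ?O {w \<in> space ?O. t < opnorm I (A w)} \<le> measure ?O (\<Union>p\<in>net I \<times> net I. E p)"
    by (rule O.finite_measure_mono[OF sub]) (use fin Em in auto)
  also have "\<dots> \<le> (\<Sum>p\<in>net I \<times> net I. measure ?O (E p))"
    by (rule O.finite_measure_subadditive_finite) (use fin Em in auto)
  also have "\<dots> \<le> (\<Sum>p\<in>net I \<times> net I. 2 * exp (- (real M * bcst \<eta> K * min (t/3) ((t/3)\<^sup>2))))"
  proof (rule sum_mono)
    fix p assume p: "p \<in> net I \<times> net I"
    have "(\<integral>\<^sup>+z. ennreal (exp (\<eta> * \<bar>phi I Hm (fst p) (snd p) z\<bar>)) \<partial>D) \<le> ennreal K"
      by (rule mom) (use p net_sq[OF I] in auto)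
    then show "measure ?O (E p) \<le> 2 * exp (- (real M * bcst \<eta> K * min (t/3) ((t/3)\<^sup>2)))"
      unfolding E_def by (rule two_tail[OF D phim eta _ K M]) (use t in auto)
  qed
  also have "\<dots> = (real (card (net I)))\<^sup>2 * (2 * exp (- (real M * bcst \<eta> K * min (t/3) ((t/3)\<^sup>2))))"
    by (simp add: card_cartesian_product power2_eq_square)
  finally show ?thesis unfolding A_def .
qed

definition acomp :: "nat \<Rightarrow> (nat \<times> nat \<Rightarrow> real) \<Rightarrow> (nat \<Rightarrow> real) \<Rightarrow> nat \<Rightarrow> real" where
  "acomp d u Y c = (\<Sum>i<d. u (c, i) * Y i)"

definition Wm :: "nat \<Rightarrow> nat \<Rightarrow> (nat \<Rightarrow> nat \<Rightarrow> real) \<Rightarrow> (nat \<Rightarrow> real) \<Rightarrow> nat \<Rightarrow> nat \<Rightarrow> real" where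
  "Wm k d x Y c c' = sm k d x Y c * (if c = c' then 1 else 0) - sm k d x Y c * sm k d x Y c'"

definition HmH :: "nat \<Rightarrow> nat \<Rightarrow> (nat \<Rightarrow> nat \<Rightarrow> real) \<Rightarrow> nat \<times> nat \<Rightarrow> nat \<times> nat \<Rightarrow> nat \<times> (nat \<Rightarrow> real) \<Rightarrow> real" where
  "HmH k d x r s z = hL k d x z (fst s) (snd s) (fst r) (snd r)"

definition HmG :: "nat \<Rightarrow> nat \<Rightarrow> (nat \<Rightarrow> nat \<Rightarrow> real) \<Rightarrow> nat \<times> nat \<Rightarrow> nat \<times> nat \<Rightarrow> nat \<times> (nat \<Rightarrow> real) \<Rightarrow> real" where
  "HmG k d x r s z = gL k d x z (fst r) (snd r) * gL k d x z (fst s) (snd s)"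

lemma sum_idx: "(\<Sum>r\<in>idx k d. f r) = (\<Sum>c<k. \<Sum>i<d. f (c, i))"
  unfolding idx_def by (simp add: sum.cartesian_product)

lemma phiH_eq:
  "phi (idx k d) (HmH k d x) u v z =
     (\<Sum>c'<k. \<Sum>c<k. Wm k d x (snd z) c c' * acomp d u (snd z) c' * acomp d v (snd z) c)"
proof -
  let ?Y = "snd z" and ?W = "Wm k d x (snd z)"
  have inner: "(\<Sum>s\<in>idx k d. HmH k d x r s z * v s) = (\<Sum>c<k. ?W c (fst r) * ?Y (snd r) * acomp d v ?Y c)" for r
    unfolding sum_idx HmH_def hL_def Wm_def[symmetric] acomp_def
    by (intro sum.cong refl) (simp add: sum_distrib_left mult_ac)
  have "phi (idx k d) (HmH k d x) u v z = (\<Sum>c'<k. \<Sum>j<d. u (c', j) * (\<Sum>c<k. ?W c c' * ?Y j * acomp d v ?Y c))"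
    unfolding phi_def inner unfolding sum_idx by simp
  also have "\<dots> = (\<Sum>c'<k. \<Sum>j<d. \<Sum>c<k. ?W c c' * (u (c', j) * ?Y j) * acomp d v ?Y c)"
    by (simp add: sum_distrib_left mult_ac)
  also have "\<dots> = (\<Sum>c'<k. \<Sum>c<k. \<Sum>j<d. ?W c c' * (u (c', j) * ?Y j) * acomp d v ?Y c)"
    by (rule sum.cong[OF refl], rule sum.swap)
  also have "\<dots> = (\<Sum>c'<k. \<Sum>c<k. ?W c c' * acomp d u ?Y c' * acomp d v ?Y c)"
    unfolding acomp_def by (simp add: sum_distrib_left sum_distrib_right mult_ac)
  finally show ?thesis .
qed

lemma phiG_eq:
  "phi (idx k d) (HmG k d x) u v z =
     (\<Sum>c<k. (sm k d x (snd z) c - (if fst z = c then 1 else 0)) * acomp d u (snd z) c) *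
     (\<Sum>c<k. (sm k d x (snd z) c - (if fst z = c then 1 else 0)) * acomp d v (snd z) c)"
proof -
  let ?e = "\<lambda>c. sm k d x (snd z) c - (if fst z = c then 1 else 0)"
  have g: "(\<Sum>r\<in>idx k d. w r * gL k d x z (fst r) (snd r)) = (\<Sum>c<k. ?e c * acomp d w (snd z) c)" for w
    unfolding sum_idx gL_def acomp_def by (simp add: sum_distrib_left sum_distrib_right mult_ac)
  have "phi (idx k d) (HmG k d x) u v z =
      (\<Sum>r\<in>idx k d. u r * gL k d x z (fst r) (snd r) * (\<Sum>s\<in>idx k d. v s * gL k d x z (fst s) (snd s)))"
    unfolding phi_def HmG_def by (intro sum.cong refl) (simp add: sum_distrib_left mult_ac)
  also have "\<dots> = (\<Sum>r\<in>idx k d. u r * gL k d x z (fst r) (snd r)) * (\<Sum>s\<in>idx k d. v s * gL k d x z (fst s) (snd s))"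
    by (simp add: sum_distrib_right)
  finally have "phi (idx k d) (HmG k d x) u v z =
      (\<Sum>r\<in>idx k d. u r * gL k d x z (fst r) (snd r)) * (\<Sum>s\<in>idx k d. v s * gL k d x z (fst s) (snd s))" .
  then show ?thesis unfolding g .
qed

lemma sm_le1: "k > 0 \<Longrightarrow> c < k \<Longrightarrow> sm k d x Y c \<le> 1"
proof -
  assume a: "k > 0" "c < k"
  have "sm k d x Y c \<le> (\<Sum>c'<k. sm k d x Y c')"
    by (rule member_le_sum) (use a sm_nonneg in auto)
  then show ?thesis using sum_sm[OF a(1)] by simp
qed

lemma wavg_sq:
  fixes s a :: "nat \<Rightarrow> real"
  assumes s0: "\<And>c. 0 \<le> s c" and s1: "(\<Sum>c<k. s c) = 1"
  shows "(\<Sum>c<k. s c * a c)\<^sup>2 \<le> (\<Sum>c<k. (a c)\<^sup>2)"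
proof -
  have "(\<Sum>c<k. s c * a c)\<^sup>2 = (\<Sum>c<k. sqrt (s c) * (sqrt (s c) * a c))\<^sup>2"
    using s0 by (simp add: mult.assoc[symmetric])
  also have "\<dots> \<le> (\<Sum>c<k. (sqrt (s c))\<^sup>2) * (\<Sum>c<k. (sqrt (s c) * a c)\<^sup>2)"
    by (rule Cauchy_Schwarz_ineq_sum)
  also have "\<dots> = (\<Sum>c<k. s c * (a c)\<^sup>2)" using s0 s1 by (simp add: power_mult_distrib)
  also have "\<dots> \<le> (\<Sum>c<k. (a c)\<^sup>2)"
  proof (rule sum_mono)
    fix c assume "c \<in> {..<k}"
    have "s c \<le> (\<Sum>c<k. s c)" by (rule member_le_sum) (use \<open>c \<in> {..<k}\<close> s0 in auto)
    then have "s c \<le> 1" using s1 by simp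
    then show "s c * (a c)\<^sup>2 \<le> (a c)\<^sup>2" using mult_right_mono[of "s c" 1 "(a c)\<^sup>2"] by simp
  qed
  finally show ?thesis .
qed

lemma prod_half: "\<bar>X * Y\<bar> \<le> (X\<^sup>2 + Y\<^sup>2) / 2" for X Y :: real
proof -
  have "0 \<le> (\<bar>X\<bar> - \<bar>Y\<bar>)\<^sup>2" by simp
  then show ?thesis by (simp add: power2_eq_square algebra_simps abs_mult)
qed

lemma phiH_bound:
  assumes k: "k > 0"
  shows "\<bar>phi (idx k d) (HmH k d x) u v z\<bar> \<le>
     (\<Sum>c<k. (acomp d u (snd z) c)\<^sup>2) + (\<Sum>c<k. (acomp d v (snd z) c)\<^sup>2)"
proof -
  let ?s = "sm k d x (snd z)" and ?a = "acomp d u (snd z)" and ?b = "acomp d v (snd z)"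
  have eq: "phi (idx k d) (HmH k d x) u v z = (\<Sum>c<k. ?s c * ?a c * ?b c) - (\<Sum>c<k. ?s c * ?a c) * (\<Sum>c<k. ?s c * ?b c)"
  proof -
    have "phi (idx k d) (HmH k d x) u v z = (\<Sum>c'<k. \<Sum>c<k. Wm k d x (snd z) c c' * ?a c' * ?b c)"
      by (rule phiH_eq)
    also have "\<dots> = (\<Sum>c'<k. ?s c' * ?a c' * ?b c' - ?s c' * ?a c' * (\<Sum>c<k. ?s c * ?b c))"
    proof (rule sum.cong[OF refl])
      fix c' assume c': "c' \<in> {..<k}"
      have "(\<Sum>c<k. Wm k d x (snd z) c c' * ?a c' * ?b c) =
          (\<Sum>c<k. (if c = c' then ?s c * ?a c' * ?b c else 0)) - (\<Sum>c<k. ?s c' * ?a c' * (?s c * ?b c))"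
      proof -
        have pw: "Wm k d x (snd z) c c' * ?a c' * ?b c = (if c = c' then ?s c * ?a c' * ?b c else 0) - ?s c' * ?a c' * (?s c * ?b c)" for c
          unfolding Wm_def by (cases "c = c'") (simp_all add: algebra_simps)
        show ?thesis unfolding pw by (rule sum_subtractf)
      qed
      also have "\<dots> = ?s c' * ?a c' * ?b c' - ?s c' * ?a c' * (\<Sum>c<k. ?s c * ?b c)"
        using c' by (simp add: sum_distrib_left)
      finally show "(\<Sum>c<k. Wm k d x (snd z) c c' * ?a c' * ?b c) = ?s c' * ?a c' * ?b c' - ?s c' * ?a c' * (\<Sum>c<k. ?s c * ?b c)" .
    qed
    also have "\<dots> = (\<Sum>c<k. ?s c * ?a c * ?b c) - (\<Sum>c<k. ?s c * ?a c) * (\<Sum>c<k. ?s c * ?b c)"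
      by (simp add: sum_subtractf sum_distrib_right)
    finally show ?thesis .
  qed
  have t1: "\<bar>\<Sum>c<k. ?s c * ?a c * ?b c\<bar> \<le> ((\<Sum>c<k. (?a c)\<^sup>2) + (\<Sum>c<k. (?b c)\<^sup>2)) / 2"
  proof -
    have "\<bar>\<Sum>c<k. ?s c * ?a c * ?b c\<bar> \<le> (\<Sum>c<k. \<bar>?s c * ?a c * ?b c\<bar>)" by (rule sum_abs)
    also have "\<dots> \<le> (\<Sum>c<k. ((?a c)\<^sup>2 + (?b c)\<^sup>2) / 2)"
    proof (rule sum_mono)
      fix c assume c: "c \<in> {..<k}"
      have "\<bar>?s c * ?a c * ?b c\<bar> = ?s c * \<bar>?a c * ?b c\<bar>" using sm_nonneg by (simp add: abs_mult)
      also have "\<dots> \<le> 1 * \<bar>?a c * ?b c\<bar>" using sm_le1[OF k] c sm_nonneg by (intro mult_right_mono) auto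
      also have "\<dots> \<le> ((?a c)\<^sup>2 + (?b c)\<^sup>2) / 2" using prod_half by simp
      finally show "\<bar>?s c * ?a c * ?b c\<bar> \<le> ((?a c)\<^sup>2 + (?b c)\<^sup>2) / 2" .
    qed
    also have "\<dots> = ((\<Sum>c<k. (?a c)\<^sup>2) + (\<Sum>c<k. (?b c)\<^sup>2)) / 2"
      by (simp only: sum_divide_distrib[symmetric] sum.distrib)
    finally show ?thesis .
  qed
  have t2: "\<bar>(\<Sum>c<k. ?s c * ?a c) * (\<Sum>c<k. ?s c * ?b c)\<bar> \<le> ((\<Sum>c<k. (?a c)\<^sup>2) + (\<Sum>c<k. (?b c)\<^sup>2)) / 2"
  proof -
    have "\<bar>(\<Sum>c<k. ?s c * ?a c) * (\<Sum>c<k. ?s c * ?b c)\<bar> \<le> ((\<Sum>c<k. ?s c * ?a c)\<^sup>2 + (\<Sum>c<k. ?s c * ?b c)\<^sup>2) / 2"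
      by (rule prod_half)
    also have "\<dots> \<le> ((\<Sum>c<k. (?a c)\<^sup>2) + (\<Sum>c<k. (?b c)\<^sup>2)) / 2"
      using wavg_sq[of ?s k ?a, OF sm_nonneg sum_sm[OF k]] wavg_sq[of ?s k ?b, OF sm_nonneg sum_sm[OF k]]
      by simp
    finally show ?thesis .
  qed
  show ?thesis unfolding eq by (rule order_trans[OF abs_triangle_ineq4], rule order_trans[OF add_mono[OF t1 t2]], simp)
qed

lemma e_sq:
  fixes e a :: "nat \<Rightarrow> real"
  assumes "\<And>c. c < k \<Longrightarrow> \<bar>e c\<bar> \<le> 1"
  shows "(\<Sum>c<k. e c * a c)\<^sup>2 \<le> real k * (\<Sum>c<k. (a c)\<^sup>2)"
proof -
  have "(\<Sum>c<k. e c * a c)\<^sup>2 \<le> (\<Sum>c<k. (e c)\<^sup>2) * (\<Sum>c<k. (a c)\<^sup>2)" by (rule Cauchy_Schwarz_ineq_sum)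
  also have "\<dots> \<le> real k * (\<Sum>c<k. (a c)\<^sup>2)"
  proof (rule mult_right_mono)
    have "(\<Sum>c<k. (e c)\<^sup>2) \<le> (\<Sum>c<k. 1)"
    proof (rule sum_mono)
      fix c assume "c \<in> {..<k}"
      then have "\<bar>e c\<bar> \<le> 1" using assms by auto
      then have "\<bar>e c\<bar>\<^sup>2 \<le> 1\<^sup>2" by (intro power_mono) auto
      then show "(e c)\<^sup>2 \<le> 1" by simp
    qed
    then show "(\<Sum>c<k. (e c)\<^sup>2) \<le> real k" by simp
  qed (simp add: sum_nonneg)
  finally show ?thesis .
qed

lemma phiG_bound:
  assumes k: "k > 0"
  shows "\<bar>phi (idx k d) (HmG k d x) u v z\<bar> \<le>
     real k * ((\<Sum>c<k. (acomp d u (snd z) c)\<^sup>2) + (\<Sum>c<k. (acomp d v (snd z) c)\<^sup>2))"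
proof -
  let ?e = "\<lambda>c. sm k d x (snd z) c - (if fst z = c then 1 else 0)"
  have e1: "\<bar>?e c\<bar> \<le> 1" if "c < k" for c
    using sm_le1[OF k that, of d x "snd z"] sm_nonneg[of k d x "snd z" c] by auto
  let ?X = "\<Sum>c<k. ?e c * acomp d u (snd z) c" and ?Y = "\<Sum>c<k. ?e c * acomp d v (snd z) c"
  have "\<bar>phi (idx k d) (HmG k d x) u v z\<bar> = \<bar>?X * ?Y\<bar>" unfolding phiG_eq ..
  also have "\<dots> \<le> (?X\<^sup>2 + ?Y\<^sup>2) / 2" by (rule prod_half)
  also have "\<dots> \<le> (real k * (\<Sum>c<k. (acomp d u (snd z) c)\<^sup>2) + real k * (\<Sum>c<k. (acomp d v (snd z) c)\<^sup>2)) / 2"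
    using e_sq[of k ?e, OF e1] by (intro divide_right_mono add_mono) auto
  also have "\<dots> \<le> real k * ((\<Sum>c<k. (acomp d u (snd z) c)\<^sup>2) + (\<Sum>c<k. (acomp d v (snd z) c)\<^sup>2))"
    by (simp add: field_simps sum_nonneg)
  finally show ?thesis .
qed

definition Qf :: "nat \<Rightarrow> nat \<Rightarrow> (nat \<times> nat \<Rightarrow> real) \<Rightarrow> nat \<times> (nat \<Rightarrow> real) \<Rightarrow> real" where
  "Qf k d u z = (\<Sum>c<k. (acomp d u (snd z) c)\<^sup>2)"

lemma exp_Q_le:
  assumes k: "k > 0"
  shows "exp (Qf k d u z / (32 * real k)) \<le> (\<Sum>c<k. exp ((acomp d u (snd z) c)\<^sup>2 / 32))"
proof -
  let ?f = "\<lambda>c. (acomp d u (snd z) c)\<^sup>2"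
  obtain c0 where c0: "c0 < k" "\<forall>c<k. ?f c \<le> ?f c0"
  proof -
    have "finite (?f ` {..<k})" "?f ` {..<k} \<noteq> {}" using k by auto
    then have "Max (?f ` {..<k}) \<in> ?f ` {..<k}" by (rule Max_in)
    then obtain c0 where "c0 < k" "?f c0 = Max (?f ` {..<k})" by auto
    moreover have "\<forall>c<k. ?f c \<le> Max (?f ` {..<k})" by auto
    ultimately show ?thesis using that by metis
  qed
  have "Qf k d u z \<le> (\<Sum>c<k. ?f c0)" unfolding Qf_def by (rule sum_mono) (use c0 in auto)
  then have "Qf k d u z \<le> real k * ?f c0" by simp
  then have "Qf k d u z / (32 * real k) \<le> ?f c0 / 32" using k by (simp add: field_simps)
  then have "exp (Qf k d u z / (32 * real k)) \<le> exp (?f c0 / 32)" by simp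
  also have "\<dots> \<le> (\<Sum>c<k. exp (?f c / 32))" by (rule member_le_sum) (use c0 in auto)
  finally show ?thesis .
qed

lemma row_sq:
  fixes u :: "nat \<times> nat \<Rightarrow> real"
  assumes "(\<Sum>r\<in>idx k d. (u r)\<^sup>2) \<le> 4" "c < k"
  shows "(\<Sum>i<d. (u (c, i))\<^sup>2) \<le> 4"
proof -
  have "(\<Sum>i<d. (u (c, i))\<^sup>2) \<le> (\<Sum>c'<k. \<Sum>i<d. (u (c', i))\<^sup>2)"
    by (rule member_le_sum[of c "{..<k}" "\<lambda>c'. \<Sum>i<d. (u (c', i))\<^sup>2"]) (use assms(2) in \<open>auto intro: sum_nonneg\<close>)
  also have "\<dots> = (\<Sum>r\<in>idx k d. (u r)\<^sup>2)" by (simp add: sum_idx)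
  finally show ?thesis using assms(1) by simp
qed

lemma row_mu:
  fixes w m :: "nat \<Rightarrow> real"
  assumes "(\<Sum>i<d. (w i)\<^sup>2) \<le> 4" "(\<Sum>i<d. (m i)\<^sup>2) = 1"
  shows "\<bar>\<Sum>i<d. w i * m i\<bar> \<le> 2"
proof -
  have "(\<Sum>i<d. w i * m i)\<^sup>2 \<le> (\<Sum>i<d. (w i)\<^sup>2) * (\<Sum>i<d. (m i)\<^sup>2)" by (rule Cauchy_Schwarz_ineq_sum)
  also have "\<dots> \<le> 2\<^sup>2" using assms by simp
  finally have "\<bar>\<Sum>i<d. w i * m i\<bar>\<^sup>2 \<le> 2\<^sup>2" by simp
  then show ?thesis by (rule power2_le_imp_le) simp
qed

lemma acomp_quad:
  assumes p: "\<forall>a<k. 0 \<le> p a" "(\<Sum>a<k. p a) = 1" and lam: "lam \<ge> 1"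
    and mu: "\<forall>a<k. (\<Sum>i<d. (mu a i)\<^sup>2) = 1"
    and u: "(\<Sum>r\<in>idx k d. (u r)\<^sup>2) \<le> 4" and c: "c < k"
  shows "(\<integral>\<^sup>+ z. ennreal (exp ((acomp d u (snd z) c)\<^sup>2 / 32)) \<partial>data_dist k d p mu lam) \<le> 4"
  unfolding acomp_def
  by (rule D_quad[OF p lam]) (use row_sq[OF u c] row_mu[OF row_sq[OF u c]] mu in auto)

lemma mom_bound:
  assumes k: "k > 0" and p: "\<forall>a<k. 0 \<le> p a" "(\<Sum>a<k. p a) = 1" and lam: "lam \<ge> 1"
    and mu: "\<forall>a<k. (\<Sum>i<d. (mu a i)\<^sup>2) = 1"
    and u: "(\<Sum>r\<in>idx k d. (u r)\<^sup>2) \<le> 4" and v: "(\<Sum>r\<in>idx k d. (v r)\<^sup>2) \<le> 4"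
    and hb: "\<And>z. \<bar>F z\<bar> \<le> real k * (Qf k d u z + Qf k d v z)"
  shows "(\<integral>\<^sup>+ z. ennreal (exp (1 / (64 * (real k)\<^sup>2) * \<bar>F z\<bar>)) \<partial>data_dist k d p mu lam) \<le> ennreal (8 * real k)"
proof -
  let ?D = "data_dist k d p mu lam"
  let ?eu = "\<lambda>z c. ennreal (exp ((acomp d u (snd z) c)\<^sup>2 / 32))"
  let ?ev = "\<lambda>z c. ennreal (exp ((acomp d v (snd z) c)\<^sup>2 / 32))"
  have mu1: "(\<lambda>z. ?eu z c) \<in> borel_measurable ?D" for c
    by (rule meas_D) (unfold acomp_def PY_def, measurable)
  have mu2: "(\<lambda>z. ?ev z c) \<in> borel_measurable ?D" for c
    by (rule meas_D) (unfold acomp_def PY_def, measurable)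
  note mu' = mu1 mu2
  have pw: "ennreal (exp (1 / (64 * (real k)\<^sup>2) * \<bar>F z\<bar>)) \<le> (\<Sum>c<k. ?eu z c) + (\<Sum>c<k. ?ev z c)" for z
  proof -
    let ?A = "Qf k d u z / (64 * real k)" and ?B = "Qf k d v z / (64 * real k)"
    have "1 / (64 * (real k)\<^sup>2) * \<bar>F z\<bar> \<le> 1 / (64 * (real k)\<^sup>2) * (real k * (Qf k d u z + Qf k d v z))"
      using hb[of z] by (intro mult_left_mono) auto
    also have "\<dots> = ?A + ?B" using k by (simp add: field_simps power2_eq_square)
    finally have "exp (1 / (64 * (real k)\<^sup>2) * \<bar>F z\<bar>) \<le> exp ?A * exp ?B" by (simp add: exp_add[symmetric])
    also have "\<dots> \<le> ((exp ?A)\<^sup>2 + (exp ?B)\<^sup>2) / 2" using prod_half[of "exp ?A" "exp ?B"] by simp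
    also have "(exp ?A)\<^sup>2 = exp (Qf k d u z / (32 * real k))" by (simp add: exp_double[symmetric] power2_eq_square exp_add[symmetric])
    also have "(exp ?B)\<^sup>2 = exp (Qf k d v z / (32 * real k))" by (simp add: power2_eq_square exp_add[symmetric])
    also have "(exp (Qf k d u z / (32 * real k)) + exp (Qf k d v z / (32 * real k))) / 2 \<le>
        ((\<Sum>c<k. exp ((acomp d u (snd z) c)\<^sup>2 / 32)) + (\<Sum>c<k. exp ((acomp d v (snd z) c)\<^sup>2 / 32))) / 2"
      using exp_Q_le[OF k, of d u z] exp_Q_le[OF k, of d v z] by simp
    also have "\<dots> \<le> ((\<Sum>c<k. exp ((acomp d u (snd z) c)\<^sup>2 / 32)) + (\<Sum>c<k. exp ((acomp d v (snd z) c)\<^sup>2 / 32)))"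
      by (simp add: add_nonneg_nonneg sum_nonneg)
    finally have "ennreal (exp (1 / (64 * (real k)\<^sup>2) * \<bar>F z\<bar>)) \<le>
        ennreal ((\<Sum>c<k. exp ((acomp d u (snd z) c)\<^sup>2 / 32)) + (\<Sum>c<k. exp ((acomp d v (snd z) c)\<^sup>2 / 32)))"
      by (rule ennreal_leI)
    also have "\<dots> = (\<Sum>c<k. ?eu z c) + (\<Sum>c<k. ?ev z c)"
      by (simp add: ennreal_plus sum_nonneg sum_ennreal)
    finally show ?thesis .
  qed
  have "(\<integral>\<^sup>+ z. ennreal (exp (1 / (64 * (real k)\<^sup>2) * \<bar>F z\<bar>)) \<partial>?D) \<le>
      (\<integral>\<^sup>+ z. ((\<Sum>c<k. ?eu z c) + (\<Sum>c<k. ?ev z c)) \<partial>?D)"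
    by (rule nn_integral_mono) (rule pw)
  also have "\<dots> = ((\<Sum>c<k. \<integral>\<^sup>+ z. ?eu z c \<partial>?D) + (\<Sum>c<k. \<integral>\<^sup>+ z. ?ev z c \<partial>?D))"
  proof -
    have m1: "(\<lambda>z. \<Sum>c<k. ?eu z c) \<in> borel_measurable ?D" using mu1 by measurable
    have m2: "(\<lambda>z. \<Sum>c<k. ?ev z c) \<in> borel_measurable ?D" using mu2 by measurable
    have "(\<integral>\<^sup>+ z. ((\<Sum>c<k. ?eu z c) + (\<Sum>c<k. ?ev z c)) \<partial>?D) =
        (\<integral>\<^sup>+ z. (\<Sum>c<k. ?eu z c) \<partial>?D) + (\<integral>\<^sup>+ z. (\<Sum>c<k. ?ev z c) \<partial>?D)"
      by (rule nn_integral_add[OF m1 m2])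
    also have "(\<integral>\<^sup>+ z. (\<Sum>c<k. ?eu z c) \<partial>?D) = (\<Sum>c<k. \<integral>\<^sup>+ z. ?eu z c \<partial>?D)"
      by (rule nn_integral_sum) (rule mu1)
    also have "(\<integral>\<^sup>+ z. (\<Sum>c<k. ?ev z c) \<partial>?D) = (\<Sum>c<k. \<integral>\<^sup>+ z. ?ev z c \<partial>?D)"
      by (rule nn_integral_sum) (rule mu2)
    finally show ?thesis .
  qed
  also have "\<dots> \<le> ((\<Sum>c<k. 4) + (\<Sum>c<k. 4))"
    by (intro add_mono sum_mono acomp_quad[OF p lam mu u] acomp_quad[OF p lam mu v]) auto
  also have "\<dots> = ennreal (8 * real k)"
  proof -
    have "ennreal (8 * real k) = ennreal (real k * 4) + ennreal (real k * 4)"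
      by (subst ennreal_plus[symmetric]) auto
    then show ?thesis by (simp add: ennreal_of_nat_eq_real_of_nat ennreal_mult)
  qed
  finally show ?thesis .
qed

lemma final_arith:
  fixes N :: nat and k d M :: nat and c0 t :: real
  assumes N: "N \<le> 3 ^ (6 * (k * d))" and d: "d \<ge> 1" and c0: "c0 > 0" and t: "t > 0"
  shows "(real N)\<^sup>2 * (2 * exp (- (real M * c0 * min (t/3) ((t/3)\<^sup>2))))
     \<le> exp (- ((c0 / 9) * (real M / real d) * min t (t\<^sup>2) - (12 * real k * ln 3 + 1)) * real d)"
proof -
  have "(real N)\<^sup>2 \<le> (3 ^ (6 * (k * d)))\<^sup>2" using N by (intro power_mono) (simp_all add: of_nat_le_iff[symmetric])
  also have "(3::real) ^ (6 * (k * d)) = exp (real (6 * (k * d)) * ln 3)"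
  proof -
    have "exp (real (6 * (k * d)) * ln 3) = exp (ln 3) ^ (6 * (k * d))" by (rule exp_of_nat_mult)
    then show ?thesis by simp
  qed
  also have "(exp (real (6 * (k * d)) * ln 3))\<^sup>2 = exp (12 * real k * ln 3 * real d)"
    by (simp add: power2_eq_square exp_add[symmetric] algebra_simps)
  finally have N2: "(real N)\<^sup>2 \<le> exp (12 * real k * ln 3 * real d)" .
  have two: "2 \<le> exp (real d)"
  proof -
    have "1 + real d \<le> exp (real d)" by (rule exp_ge_add_one_self[unfolded add.commute[of _ 1]])
    moreover have "real d \<ge> 1" using d by simp
    ultimately show ?thesis by linarith
  qed
  have mn: "min t (t\<^sup>2) / 9 \<le> min (t/3) ((t/3)\<^sup>2)"
    using t by (auto simp: min_def power2_eq_square field_simps)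
  have e3: "exp (- (real M * c0 * min (t/3) ((t/3)\<^sup>2))) \<le> exp (- (c0 / 9 * real M * min t (t\<^sup>2)))"
  proof -
    have "real M * c0 * (min t (t\<^sup>2) / 9) \<le> real M * c0 * min (t/3) ((t/3)\<^sup>2)"
      using mn c0 by (intro mult_left_mono) auto
    then show ?thesis by (simp add: field_simps)
  qed
  have "(real N)\<^sup>2 * (2 * exp (- (real M * c0 * min (t/3) ((t/3)\<^sup>2))))
      \<le> exp (12 * real k * ln 3 * real d) * (exp (real d) * exp (- (c0 / 9 * real M * min t (t\<^sup>2))))"
    using N2 two e3 by (intro mult_mono) auto
  also have "\<dots> = exp (- ((c0 / 9) * (real M / real d) * min t (t\<^sup>2) - (12 * real k * ln 3 + 1)) * real d)"
    using d by (simp add: exp_add[symmetric] field_simps)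
  finally show ?thesis .
qed

definition cst0 :: "nat \<Rightarrow> real" where
  "cst0 k = bcst (1 / (64 * (real k)\<^sup>2)) (8 * real k)"

lemma cst0_pos: "k > 0 \<Longrightarrow> cst0 k > 0"
  unfolding cst0_def bcst_def K2c_def by (simp add: field_simps)

lemma case_bound:
  fixes X :: "(nat \<Rightarrow> nat \<times> (nat \<Rightarrow> real)) \<Rightarrow> nat \<times> nat \<Rightarrow> nat \<times> nat \<Rightarrow> real"
    and Hm :: "nat \<times> nat \<Rightarrow> nat \<times> nat \<Rightarrow> nat \<times> (nat \<Rightarrow> real) \<Rightarrow> real"
  assumes k: "k \<ge> 2" and d: "d \<ge> 1" and M: "M \<ge> 1"
    and p: "\<forall>a<k. 0 < p a \<and> p a < 1" "(\<Sum>a<k. p a) = 1"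
    and mu: "\<forall>a<k. (\<Sum>i<d. (mu a i)\<^sup>2) = 1" and lam: "lam \<ge> 1" and t: "t > 0"
    and X: "\<And>w r s. r \<in> idx k d \<Longrightarrow> s \<in> idx k d \<Longrightarrow> X w r s = (1 / real M) * (\<Sum>l<M. Hm r s (w l))"
    and Hmeas: "\<And>r s. Hm r s \<in> borel_measurable (count_space UNIV \<Otimes>\<^sub>M PY d)"
    and hb: "\<And>u v z. \<bar>phi (idx k d) Hm u v z\<bar> \<le> real k * (Qf k d u z + Qf k d v z)"
  shows "measure (sample_space M k d p mu lam) {w \<in> space (sample_space M k d p mu lam).
       t < opnorm (idx k d) (\<lambda>r s. X w r s - (\<integral>w'. X w' r s \<partial>sample_space M k d p mu lam))}
     \<le> exp (- ((cst0 k / 9) * (real M / real d) * min t (t\<^sup>2) - (12 * real k * ln 3 + 1)) * real d)"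
proof -
  let ?D = "data_dist k d p mu lam"
  let ?O = "\<Pi>\<^sub>M l\<in>{..<M}. ?D"
  let ?I = "idx k d"
  have k0: "k > 0" using k by simp
  have p0: "\<forall>a<k. 0 \<le> p a" using p by auto
  have D: "prob_space ?D" by (rule prob_D) (use p0 p lam in auto)
  have "(0, 0) \<in> ?I" using k d unfolding idx_def by auto
  then have I: "finite ?I" "?I \<noteq> {}" unfolding idx_def by auto
  have Om: "sample_space M k d p mu lam = ?O" unfolding sample_space_def ..
  have Hm': "\<And>r s. Hm r s \<in> borel_measurable ?D" using Hmeas by (rule meas_D)
  have eqset: "{w \<in> space ?O. t < opnorm ?I (\<lambda>r s. X w r s - (\<integral>w'. X w' r s \<partial>?O))} =
      {w \<in> space ?O. t < opnorm ?I (\<lambda>r s. (1 / real M) * (\<Sum>l<M. Hm r s (w l))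
            - (\<integral>w'. (1 / real M) * (\<Sum>l<M. Hm r s (w' l)) \<partial>?O))}"
  proof -
    have "opnorm ?I (\<lambda>r s. X w r s - (\<integral>w'. X w' r s \<partial>?O)) =
        opnorm ?I (\<lambda>r s. (1 / real M) * (\<Sum>l<M. Hm r s (w l)) - (\<integral>w'. (1 / real M) * (\<Sum>l<M. Hm r s (w' l)) \<partial>?O))" for w
      by (rule opnorm_cong) (simp add: X)
    then show ?thesis by simp
  qed
  have mom: "(\<integral>\<^sup>+z. ennreal (exp (1 / (64 * (real k)\<^sup>2) * \<bar>phi ?I Hm u v z\<bar>)) \<partial>?D) \<le> ennreal (8 * real k)"
    if "(\<Sum>r\<in>?I. (u r)\<^sup>2) \<le> 4" "(\<Sum>r\<in>?I. (v r)\<^sup>2) \<le> 4" for u v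
    by (rule mom_bound[OF k0 p0 p(2) lam mu that hb])
  have "measure ?O {w \<in> space ?O. t < opnorm ?I (\<lambda>r s. (1 / real M) * (\<Sum>l<M. Hm r s (w l))
            - (\<integral>w'. (1 / real M) * (\<Sum>l<M. Hm r s (w' l)) \<partial>?O))}
      \<le> (real (card (net ?I)))\<^sup>2 * (2 * exp (- (real M * bcst (1 / (64 * (real k)\<^sup>2)) (8 * real k) * min (t/3) ((t/3)\<^sup>2))))"
    by (rule assemble[OF D I Hm' mom]) (use k M t in auto)
  also have "\<dots> \<le> exp (- ((cst0 k / 9) * (real M / real d) * min t (t\<^sup>2) - (12 * real k * ln 3 + 1)) * real d)"
    unfolding cst0_def[symmetric]
    by (rule final_arith) (use net_card[OF I] d cst0_pos[OF k0] t in \<open>auto simp: idx_def\<close>)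
  finally show ?thesis unfolding Om eqset .
qed

lemma comp_meas[measurable]: "(\<lambda>Y. Y i) \<in> borel_measurable (\<Pi>\<^sub>M j\<in>{..<d}. (lborel::real measure))"
proof (cases "i < d")
  case True
  have "(\<lambda>Y. Y i) \<in> measurable (\<Pi>\<^sub>M j\<in>{..<d}. (lborel::real measure)) lborel"
    using True by (intro measurable_component_singleton) simp
  then show ?thesis using measurable_cong_sets[OF refl sets_lborel] by blast
next
  case False
  have "(\<lambda>Y. undefined::real) \<in> borel_measurable (\<Pi>\<^sub>M j\<in>{..<d}. (lborel::real measure))" by simp
  moreover have "\<And>Y. Y \<in> space (\<Pi>\<^sub>M j\<in>{..<d}. (lborel::real measure)) \<Longrightarrow> Y i = undefined"
    using False by (auto simp: space_PiM PiE_def extensional_def)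
  moreover have "(\<lambda>Y. Y i) \<in> borel_measurable (\<Pi>\<^sub>M j\<in>{..<d}. (lborel::real measure)) \<longleftrightarrow>
      (\<lambda>Y. undefined::real) \<in> borel_measurable (\<Pi>\<^sub>M j\<in>{..<d}. (lborel::real measure))"
    by (rule Sigma_Algebra.measurable_cong) (use calculation(2) in simp)
  ultimately show ?thesis by blast
qed

lemma HmH_meas: "HmH k d x r s \<in> borel_measurable (count_space UNIV \<Otimes>\<^sub>M PY d)"
  by (rule meas_pair_count) (unfold HmH_def hL_def sm_def Ssum_def dotp_def PY_def fst_conv snd_conv, measurable)

lemma HmG_meas: "HmG k d x r s \<in> borel_measurable (count_space UNIV \<Otimes>\<^sub>M PY d)"
  by (rule meas_pair_count) (unfold HmG_def gL_def sm_def Ssum_def dotp_def PY_def fst_conv snd_conv, measurable)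

theorem theorem6p1:
  fixes k :: nat
  assumes "k \<ge> 2"
  shows "\<exists>c>0. \<exists>C::real. \<forall>(d::nat) (M::nat) (p::nat \<Rightarrow> real) (mu::nat \<Rightarrow> nat \<Rightarrow> real)
            (lam::real) (t::real) (x::nat \<Rightarrow> nat \<Rightarrow> real).
     d \<ge> 1 \<and> M \<ge> 1 \<and> (\<forall>a<k. 0 < p a \<and> p a < 1) \<and> (\<Sum>a<k. p a) = 1 \<and>
     (\<forall>a<k. (\<Sum>i<d. (mu a i)\<^sup>2) = 1) \<and> lam \<ge> 1 \<and> t > 0 \<longrightarrow>
     (let \<Omega> = sample_space M k d p mu lam; \<alpha> = real M / real d;
          bound = exp (- (c * \<alpha> * min t (t\<^sup>2) - C) * real d) in
       measure \<Omega> {w \<in> space \<Omega>.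
          opnorm (idx k d)
            (\<lambda>r s. hess (emp_risk M k d w) x r s
                    - (\<integral>w'. hess (emp_risk M k d w') x r s \<partial>\<Omega>)) > t} \<le> bound
       \<and>
       measure \<Omega> {w \<in> space \<Omega>.
          opnorm (idx k d)
            (\<lambda>r s. emp_G M k d w x r s - (\<integral>w'. emp_G M k d w' x r s \<partial>\<Omega>)) > t} \<le> bound)"
proof -
  have k0: "k > 0" using assms by simp
  show ?thesis
  proof (rule exI[of _ "cst0 k / 9"], rule conjI[rotated], rule exI[of _ "12 * real k * ln 3 + 1"], intro allI impI)
    show "cst0 k / 9 > 0" using cst0_pos[OF k0] by simp
    fix d M :: nat and p :: "nat \<Rightarrow> real" and mu :: "nat \<Rightarrow> nat \<Rightarrow> real" and lam t :: real
      and x :: "nat \<Rightarrow> nat \<Rightarrow> real"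
    assume H: "d \<ge> 1 \<and> M \<ge> 1 \<and> (\<forall>a<k. 0 < p a \<and> p a < 1) \<and> (\<Sum>a<k. p a) = 1 \<and>
       (\<forall>a<k. (\<Sum>i<d. (mu a i)\<^sup>2) = 1) \<and> lam \<ge> 1 \<and> t > (0::real)"
    then have d: "d \<ge> 1" and M: "M \<ge> 1" and p: "\<forall>a<k. 0 < p a \<and> p a < 1" "(\<Sum>a<k. p a) = 1"
      and mu: "\<forall>a<k. (\<Sum>i<d. (mu a i)\<^sup>2) = 1" and lam: "lam \<ge> 1" and t: "t > 0" by auto
    have h1: "measure (sample_space M k d p mu lam) {w \<in> space (sample_space M k d p mu lam).
       t < opnorm (idx k d) (\<lambda>r s. hess (emp_risk M k d w) x r s - (\<integral>w'. hess (emp_risk M k d w') x r s \<partial>sample_space M k d p mu lam))}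
     \<le> exp (- ((cst0 k / 9) * (real M / real d) * min t (t\<^sup>2) - (12 * real k * ln 3 + 1)) * real d)"
    proof (rule case_bound[OF assms d M p mu lam t _ HmH_meas])
      show "hess (emp_risk M k d w) x r s = (1 / real M) * (\<Sum>l<M. HmH k d x r s (w l))"
        if "r \<in> idx k d" "s \<in> idx k d" for w r s
        unfolding hess_emp[OF that] HmH_def ..
      show "\<bar>phi (idx k d) (HmH k d x) u v z\<bar> \<le> real k * (Qf k d u z + Qf k d v z)" for u v z
      proof -
        have "\<bar>phi (idx k d) (HmH k d x) u v z\<bar> \<le> 1 * (Qf k d u z + Qf k d v z)"
          using phiH_bound[OF k0, of d x u v z] unfolding Qf_def by simp
        also have "\<dots> \<le> real k * (Qf k d u z + Qf k d v z)"
          using k0 by (intro mult_right_mono) (auto simp: Qf_def intro!: add_nonneg_nonneg sum_nonneg)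
        finally show ?thesis .
      qed
    qed
    have h2: "measure (sample_space M k d p mu lam) {w \<in> space (sample_space M k d p mu lam).
       t < opnorm (idx k d) (\<lambda>r s. emp_G M k d w x r s - (\<integral>w'. emp_G M k d w' x r s \<partial>sample_space M k d p mu lam))}
     \<le> exp (- ((cst0 k / 9) * (real M / real d) * min t (t\<^sup>2) - (12 * real k * ln 3 + 1)) * real d)"
    proof (rule case_bound[OF assms d M p mu lam t _ HmG_meas])
      show "emp_G M k d w x r s = (1 / real M) * (\<Sum>l<M. HmG k d x r s (w l))"
        if "r \<in> idx k d" "s \<in> idx k d" for w r s
        unfolding empG_eq[OF that] HmG_def ..
      show "\<bar>phi (idx k d) (HmG k d x) u v z\<bar> \<le> real k * (Qf k d u z + Qf k d v z)" for u v z
        using phiG_bound[OF k0, of d x u v z] unfolding Qf_def by simp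
    qed
    show "let \<Omega> = sample_space M k d p mu lam; \<alpha> = real M / real d;
          bound = exp (- (cst0 k / 9 * \<alpha> * min t (t\<^sup>2) - (12 * real k * ln 3 + 1)) * real d) in
       measure \<Omega> {w \<in> space \<Omega>.
          opnorm (idx k d)
            (\<lambda>r s. hess (emp_risk M k d w) x r s
                    - (\<integral>w'. hess (emp_risk M k d w') x r s \<partial>\<Omega>)) > t} \<le> bound
       \<and>
       measure \<Omega> {w \<in> space \<Omega>.
          opnorm (idx k d)
            (\<lambda>r s. emp_G M k d w x r s - (\<integral>w'. emp_G M k d w' x r s \<partial>\<Omega>)) > t} \<le> bound"
      unfolding Let_def using h1 h2 by simp
  qed
qed

end
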